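(* Let $d\in\mathbb{N}$ and let $w(k)>0$, $k\in\mathbb{Z}^d$, be weights with $\sum_{k\in\mathbb{Z}^d}w(k)^{-2}<\infty$. Then for all $n\in\mathbb{N}$ $$a_n\big(I_d:\mathcal{M}(\mathbb{T}^d)\to F_d(1/w)\big)=a_n\big(I_d:\mathcal{B}(\mathbb{T}^d)\to F_d(1/w)\big)=a_n\big(I_d:F_d(w)\to\mathcal{A}(\mathbb{T}^d)\big).$$
   Context: $\mathbb{T}^d=[0,2\pi)^d$ with the normalized Lebesgue measure $(2\pi)^{-d}dx$; $\hat f(k)=(2\pi)^{-d}\int_{\mathbb{T}^d}f(x)e^{-ik\cdot x}dx$ for $f\in L_1$. Periodic distributions $g$ are identified with formal Fourier series $\sum_k\hat g(k)e^{ik\cdot x}$ with polynomially bounded coefficients. For weights $v(k)>0$, $F_d(v)$ is the Hilbert space of periodic distributions $g$ with $\|g|F_d(v)\|=(\sum_k v(k)^2|\hat g(k)|^2)^{1/2}<\infty$; $1/w$ denotes the weight $k\mapsto1/w(k)$. $\mathcal{A}(\mathbb{T}^d)$: $f$ with $\|f|\mathcal{A}\|=\sum_k|\hat f(k)|<\infty$. $\mathcal{B}(\mathbb{T}^d)$: periodic distributions $g$ with $\|g|\mathcal{B}\|=\sup_k|\hat g(k)|<\infty$. $\mathcal{M}(\mathbb{T}^d)$: complex Borel measures $\mu$ on $\mathbb{T}^d$ with norm the total variation $|\mu|(\mathbb{T}^d)$ (the dual of $C(\mathbb{T}^d)$ via $f\mapsto\int f\,d\mu$); $\mu$ is identified with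 the periodic distribution with coefficients $\hat\mu(k)=\int_{\mathbb{T}^d}e^{-ik\cdot x}d\mu(x)$ (so an integrable $f$ corresponds to the measure $f(x)(2\pi)^{-d}dx$). $I_d$ denotes the inclusion maps; $a_n(T)=\inf\{\|T-A\|:\operatorname{rank}A<n\}$. *)

theory Defs
  imports "HOL-Analysis.Analysis"
begin

text \<open>Dimension d is the cardinality of the finite index type 'd.
  Periodic distributions are identified with their Fourier coefficient
  sequences (int^'d \<Rightarrow> complex).\<close>

type_synonym 'd coeffs = "int^'d \<Rightarrow> complex"

definition kdot :: "int^'d::finite \<Rightarrow> real^'d \<Rightarrow> real" where
  "kdot k x = (\<Sum>i\<in>UNIV. real_of_int (k $ i) * x $ i)"

definition torus :: "(real^'d::finite) set" where
  "torus = {x. \<forall>i. 0 \<le> x $ i \<and> x $ i < 2 * pi}"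

text \<open>Polynomially bounded coefficients (= periodic distributions).\<close>
definition poly_bounded :: "'d::finite coeffs \<Rightarrow> bool" where
  "poly_bounded c \<longleftrightarrow> (\<exists>C N. \<forall>k. cmod (c k) \<le> C * (1 + (\<Sum>i\<in>UNIV. real_of_int \<bar>k $ i\<bar>)) ^ N)"

definition F_set :: "(int^'d::finite \<Rightarrow> real) \<Rightarrow> 'd coeffs set" where
  "F_set v = {c. poly_bounded c \<and> (\<lambda>k. (v k)\<^sup>2 * (cmod (c k))\<^sup>2) summable_on UNIV}"

definition F_norm :: "(int^'d::finite \<Rightarrow> real) \<Rightarrow> 'd coeffs \<Rightarrow> real" where
  "F_norm v c = sqrt (\<Sum>\<^sub>\<infinity>k. (v k)\<^sup>2 * (cmod (c k))\<^sup>2)"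

definition A_set :: "'d::finite coeffs set" where
  "A_set = {c. (\<lambda>k. cmod (c k)) summable_on UNIV}"

definition A_norm :: "'d::finite coeffs \<Rightarrow> real" where
  "A_norm c = (\<Sum>\<^sub>\<infinity>k. cmod (c k))"

definition B_set :: "'d::finite coeffs set" where
  "B_set = {c. bounded (range (\<lambda>k. cmod (c k)))}"

definition B_norm :: "'d::finite coeffs \<Rightarrow> real" where
  "B_norm c = (SUP k. cmod (c k))"

text \<open>Complex Borel measures on T^d, represented as mu = h * nu with nu a
  finite Borel measure concentrated on the torus and h \<in> L1(nu).
  Every complex Borel measure arises this way (take nu = |mu|), and the total
  variation of h * nu is the integral of |h| w.r.t. nu.\<close>
definition cmeas_rep :: "(real^'d::finite) measure \<Rightarrow> (real^'d \<Rightarrow> complex) \<Rightarrow> bool" where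
  "cmeas_rep \<nu> h \<longleftrightarrow> sets \<nu> = sets borel \<and> finite_measure \<nu> \<and>
      emeasure \<nu> (UNIV - torus) = 0 \<and> integrable \<nu> h"

definition meas_coeff :: "(real^'d::finite) measure \<Rightarrow> (real^'d \<Rightarrow> complex) \<Rightarrow> 'd coeffs" where
  "meas_coeff \<nu> h = (\<lambda>k. integral\<^sup>L \<nu> (\<lambda>x. exp (- \<i> * complex_of_real (kdot k x)) * h x))"

definition M_set :: "'d::finite coeffs set" where
  "M_set = {c. \<exists>\<nu> h. cmeas_rep \<nu> h \<and> c = meas_coeff \<nu> h}"

text \<open>Total variation norm (all representations of the same measure give the
  same value, so the infimum is the total variation).\<close>
definition M_norm :: "'d::finite coeffs \<Rightarrow> real" where
  "M_norm c = (INF (\<nu>, h) \<in> {(\<nu>, h). cmeas_rep \<nu> h \<and> c = meas_coeff \<nu> h}.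
                  integral\<^sup>L \<nu> (\<lambda>x. cmod (h x)))"

definition op_norm :: "'d coeffs set \<Rightarrow> ('d coeffs \<Rightarrow> real) \<Rightarrow> ('d coeffs \<Rightarrow> real)
    \<Rightarrow> ('d coeffs \<Rightarrow> 'd coeffs) \<Rightarrow> real" where
  "op_norm X nX nY T = (SUP x \<in> {x \<in> X. nX x \<le> 1}. nY (T x))"

definition bounded_lin_op :: "'d coeffs set \<Rightarrow> ('d coeffs \<Rightarrow> real) \<Rightarrow> 'd coeffs set
    \<Rightarrow> ('d coeffs \<Rightarrow> real) \<Rightarrow> ('d coeffs \<Rightarrow> 'd coeffs) \<Rightarrow> bool" where
  "bounded_lin_op X nX Y nY A \<longleftrightarrow>
     (\<forall>x\<in>X. A x \<in> Y) \<and>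
     (\<forall>x\<in>X. \<forall>y\<in>X. A (\<lambda>k. x k + y k) = (\<lambda>k. A x k + A y k)) \<and>
     (\<forall>x\<in>X. \<forall>a::complex. A (\<lambda>k. a * x k) = (\<lambda>k. a * A x k)) \<and>
     (\<exists>C. \<forall>x\<in>X. nY (A x) \<le> C * nX x)"

definition rank_less :: "'d coeffs set \<Rightarrow> ('d coeffs \<Rightarrow> 'd coeffs) \<Rightarrow> nat \<Rightarrow> bool" where
  "rank_less X A n \<longleftrightarrow> (\<exists>m<n. \<exists>ys :: nat \<Rightarrow> 'd coeffs.
       \<forall>x\<in>X. \<exists>a :: nat \<Rightarrow> complex. A x = (\<lambda>k. \<Sum>j<m. a j * ys j k))"

definition approx_num :: "'d coeffs set \<Rightarrow> ('d coeffs \<Rightarrow> real) \<Rightarrow> 'd coeffs set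
    \<Rightarrow> ('d coeffs \<Rightarrow> real) \<Rightarrow> ('d coeffs \<Rightarrow> 'd coeffs) \<Rightarrow> nat \<Rightarrow> real" where
  "approx_num X nX Y nY T n =
     (INF A \<in> {A. bounded_lin_op X nX Y nY A \<and> rank_less X A n}.
        op_norm X nX nY (\<lambda>x k. T x k - A x k))"

end

theory Submission
  imports Defs "HOL-Probability.Giry_Monad"
begin

definition ipQ :: "'k set \<Rightarrow> ('k \<Rightarrow> complex) \<Rightarrow> ('k \<Rightarrow> complex) \<Rightarrow> complex" where
  "ipQ Q f g = (\<Sum>k\<in>Q. f k * cnj (g k))"

definition nQ :: "'k set \<Rightarrow> ('k \<Rightarrow> complex) \<Rightarrow> real" where
  "nQ Q f = (\<Sum>k\<in>Q. (cmod (f k))\<^sup>2)"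

definition orthoN :: "'k set \<Rightarrow> (nat \<Rightarrow> 'k \<Rightarrow> complex) \<Rightarrow> nat \<Rightarrow> bool" where
  "orthoN Q b r \<longleftrightarrow> (\<forall>i<r. \<forall>j<r. ipQ Q (b i) (b j) = (if i = j then 1 else 0))"

lemma ipQ_self: "ipQ Q f f = of_real (nQ Q f)"
  unfolding ipQ_def nQ_def by (simp only: of_real_sum complex_norm_square)

lemma ipQ_cnj: "ipQ Q g f = cnj (ipQ Q f g)"
  unfolding ipQ_def by (simp add: mult.commute)

lemma ipQ_sum_left: "ipQ Q (\<lambda>k. \<Sum>i<r. d i * b i k) g = (\<Sum>i<r. d i * ipQ Q (b i) g)"
  unfolding ipQ_def by (simp add: sum_distrib_left sum_distrib_right sum.swap[of _ Q] mult.assoc)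

lemma ipQ_sum_right: "ipQ Q g (\<lambda>k. \<Sum>i<r. d i * b i k) = (\<Sum>i<r. cnj (d i) * ipQ Q g (b i))"
  by (subst ipQ_cnj, subst ipQ_sum_left) (simp add: ipQ_cnj[of Q g])

lemma ipQ_diff_left: "ipQ Q (\<lambda>k. f k - g k) h = ipQ Q f h - ipQ Q g h"
  unfolding ipQ_def by (simp add: algebra_simps sum_subtractf)

lemma ipQ_diff_right: "ipQ Q h (\<lambda>k. f k - g k) = ipQ Q h f - ipQ Q h g"
  unfolding ipQ_def by (simp add: algebra_simps sum_subtractf)

lemma nQ_nonneg: "nQ Q f \<ge> 0"
  unfolding nQ_def by (simp add: sum_nonneg)

lemma ortho_sum_norm:
  assumes "orthoN Q b r"
  shows "ipQ Q (\<lambda>k. \<Sum>i<r. d i * b i k) (\<lambda>k. \<Sum>i<r. d i * b i k) = of_real (\<Sum>i<r. (cmod (d i))\<^sup>2)"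
proof -
  have "ipQ Q (\<lambda>k. \<Sum>i<r. d i * b i k) (\<lambda>k. \<Sum>i<r. d i * b i k)
      = (\<Sum>i<r. d i * (\<Sum>j<r. cnj (d j) * ipQ Q (b i) (b j)))"
    by (simp add: ipQ_sum_left ipQ_sum_right)
  also have "\<dots> = (\<Sum>i<r. d i * cnj (d i))"
  proof (rule sum.cong[OF refl])
    fix i assume i: "i \<in> {..<r}"
    have "(\<Sum>j<r. cnj (d j) * ipQ Q (b i) (b j)) = (\<Sum>j<r. if j = i then cnj (d j) else 0)"
      using assms i unfolding orthoN_def by (intro sum.cong) auto
    also have "\<dots> = cnj (d i)" using i by (simp add: sum.delta')
    finally show "d i * (\<Sum>j<r. cnj (d j) * ipQ Q (b i) (b j)) = d i * cnj (d i)" by simp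
  qed
  also have "\<dots> = of_real (\<Sum>i<r. (cmod (d i))\<^sup>2)"
    by (simp only: of_real_sum complex_norm_square)
  finally show ?thesis .
qed

lemma proj_identity:
  assumes "orthoN Q b r"
  shows "nQ Q (\<lambda>k. u k - (\<Sum>i<r. d i * b i k))
       = nQ Q u + (\<Sum>i<r. (cmod (d i - ipQ Q u (b i)))\<^sup>2 - (cmod (ipQ Q u (b i)))\<^sup>2)"
proof -
  define v where "v = (\<lambda>k. \<Sum>i<r. d i * b i k)"
  define p where "p = (\<lambda>i. ipQ Q u (b i))"
  have uv: "ipQ Q u v = (\<Sum>i<r. cnj (d i) * p i)"
    unfolding v_def p_def by (simp add: ipQ_sum_right)
  have vv: "ipQ Q v v = of_real (\<Sum>i<r. (cmod (d i))\<^sup>2)"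
    unfolding v_def using assms by (rule ortho_sum_norm)
  have "of_real (nQ Q (\<lambda>k. u k - v k)) = ipQ Q (\<lambda>k. u k - v k) (\<lambda>k. u k - v k)"
    by (simp add: ipQ_self)
  also have "\<dots> = ipQ Q u u - ipQ Q u v - cnj (ipQ Q u v) + ipQ Q v v"
    by (simp add: ipQ_diff_left ipQ_diff_right ipQ_cnj[of Q v u])
  finally have e: "of_real (nQ Q (\<lambda>k. u k - v k)) = ipQ Q u u - ipQ Q u v - cnj (ipQ Q u v) + ipQ Q v v" .
  have "nQ Q (\<lambda>k. u k - v k) = Re (ipQ Q u u - ipQ Q u v - cnj (ipQ Q u v) + ipQ Q v v)"
    using arg_cong[OF e, of Re] by simp
  also have "\<dots> = nQ Q u - 2 * Re (ipQ Q u v) + (\<Sum>i<r. (cmod (d i))\<^sup>2)"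
    using vv by (simp add: ipQ_self)
  also have "\<dots> = nQ Q u + (\<Sum>i<r. (cmod (d i))\<^sup>2 - 2 * Re (cnj (d i) * p i))"
    by (simp add: uv Re_sum sum_subtractf sum_distrib_left)
  also have "\<dots> = nQ Q u + (\<Sum>i<r. (cmod (d i - p i))\<^sup>2 - (cmod (p i))\<^sup>2)"
  proof -
    have "\<And>x y :: complex. (cmod x)\<^sup>2 - 2 * Re (cnj x * y) = (cmod (x - y))\<^sup>2 - (cmod y)\<^sup>2"
      by (simp only: cmod_power2) (simp add: power2_eq_square algebra_simps)
    then show ?thesis by simp
  qed
  finally show ?thesis unfolding v_def p_def .
qed

lemma proj_ineq:
  assumes "orthoN Q b r"
  shows "nQ Q (\<lambda>k. u k - (\<Sum>i<r. d i * b i k)) \<ge> nQ Q u - (\<Sum>i<r. (cmod (ipQ Q u (b i)))\<^sup>2)"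
proof -
  have "(\<Sum>i<r. (cmod (d i - ipQ Q u (b i)))\<^sup>2 - (cmod (ipQ Q u (b i)))\<^sup>2) \<ge> (\<Sum>i<r. - (cmod (ipQ Q u (b i)))\<^sup>2)"
    by (intro sum_mono) simp
  then show ?thesis using proj_identity[OF assms, of u d] by (simp add: sum_negf)
qed

lemma bessel:
  assumes "orthoN Q b r"
  shows "(\<Sum>i<r. (cmod (ipQ Q u (b i)))\<^sup>2) \<le> nQ Q u"
proof -
  have "0 \<le> nQ Q (\<lambda>k. u k - (\<Sum>i<r. ipQ Q u (b i) * b i k))" by (rule nQ_nonneg)
  also have "\<dots> = nQ Q u + (\<Sum>i<r. - (cmod (ipQ Q u (b i)))\<^sup>2)"
    using proj_identity[OF assms, of u "\<lambda>i. ipQ Q u (b i)"] by simp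
  finally show ?thesis by (simp add: sum_negf)
qed

lemma ipQ_scale_left: "ipQ Q (\<lambda>k. f k / c) g = ipQ Q f g / c"
  unfolding ipQ_def by (simp add: sum_divide_distrib)

lemma ipQ_scale_right: "ipQ Q f (\<lambda>k. g k / complex_of_real c) = ipQ Q f g / complex_of_real c"
  unfolding ipQ_def by (simp add: sum_divide_distrib)

lemma nQ_zero_imp:
  assumes "finite Q" "nQ Q f = 0" "k \<in> Q" shows "f k = 0"
proof -
  have "\<forall>k\<in>Q. (cmod (f k))\<^sup>2 = 0"
    using assms sum_nonneg_eq_0_iff[of Q "\<lambda>k. (cmod (f k))\<^sup>2"] unfolding nQ_def by simp
  then show ?thesis using assms by simp
qed

lemma ortho_residual:
  assumes "orthoN Q b r" "i < r"
  shows "ipQ Q (\<lambda>k. y k - (\<Sum>j<r. ipQ Q y (b j) * b j k)) (b i) = 0"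
proof -
  have "ipQ Q (\<lambda>k. y k - (\<Sum>j<r. ipQ Q y (b j) * b j k)) (b i)
      = ipQ Q y (b i) - (\<Sum>j<r. ipQ Q y (b j) * ipQ Q (b j) (b i))"
    by (simp add: ipQ_diff_left ipQ_sum_left)
  also have "(\<Sum>j<r. ipQ Q y (b j) * ipQ Q (b j) (b i)) = (\<Sum>j<r. if j = i then ipQ Q y (b j) else 0)"
    using assms unfolding orthoN_def by (intro sum.cong) auto
  also have "\<dots> = ipQ Q y (b i)" using assms(2) by (simp add: sum.delta')
  finally show ?thesis by simp
qed

lemma gram_schmidt:
  assumes "finite Q"
  shows "\<exists>r\<le>m. \<exists>b. orthoN Q b r \<and> (\<forall>j<m. \<exists>c. \<forall>k\<in>Q. ys j k = (\<Sum>i<r. c i * b i k))"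
proof (induction m)
  case 0
  show ?case by (rule exI[of _ 0]) (auto simp: orthoN_def)
next
  case (Suc m)
  then obtain r b where r: "r \<le> m" and ob: "orthoN Q b r"
    and sp: "\<forall>j<m. \<exists>c. \<forall>k\<in>Q. ys j k = (\<Sum>i<r. c i * b i k)" by blast
  define y where "y = ys m"
  define p where "p = (\<lambda>i. ipQ Q y (b i))"
  define res where "res = (\<lambda>k. y k - (\<Sum>i<r. p i * b i k))"
  have res_orth: "ipQ Q res (b i) = 0" if "i < r" for i
    unfolding res_def p_def using ortho_residual[OF ob that] by simp
  show ?case
  proof (cases "nQ Q res = 0")
    case True
    have "\<forall>k\<in>Q. y k = (\<Sum>i<r. p i * b i k)"
      using nQ_zero_imp[OF assms True] unfolding res_def by simp
    then have "\<forall>j<Suc m. \<exists>c. \<forall>k\<in>Q. ys j k = (\<Sum>i<r. c i * b i k)"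
      using sp unfolding y_def by (metis less_Suc_eq)
    then show ?thesis using r ob by (intro exI[of _ r]) auto
  next
    case False
    define nr where "nr = sqrt (nQ Q res)"
    have nrpos: "nr > 0" using False nQ_nonneg[of Q res] unfolding nr_def by simp
    define b' where "b' = b(r := (\<lambda>k. res k / complex_of_real nr))"
    have b'lt: "b' i = b i" if "i < r" for i using that unfolding b'_def by simp
    have nr2: "nr * nr = nQ Q res" unfolding nr_def using nQ_nonneg[of Q res] by simp
    have ob': "orthoN Q b' (Suc r)"
      unfolding orthoN_def
    proof (intro allI impI)
      fix i j assume i: "i < Suc r" and j: "j < Suc r"
      show "ipQ Q (b' i) (b' j) = (if i = j then 1 else 0)"
      proof (cases "i < r")
        case True
        then show ?thesis
        proof (cases "j < r")
          case True
          with \<open>i < r\<close> ob show ?thesis unfolding orthoN_def by (simp add: b'lt)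
        next
          case False
          then have "j = r" using j by simp
          then have "ipQ Q (b' i) (b' j) = cnj (ipQ Q res (b i) / complex_of_real nr)"
            using \<open>i < r\<close> by (simp add: b'_def ipQ_scale_left ipQ_cnj[of Q "b i"])
          then show ?thesis using res_orth[OF \<open>i<r\<close>] \<open>j = r\<close> \<open>i<r\<close> by simp
        qed
      next
        case False
        then have ir: "i = r" using i by simp
        show ?thesis
        proof (cases "j < r")
          case True
          then have "ipQ Q (b' i) (b' j) = ipQ Q res (b j) / complex_of_real nr"
            using ir by (simp add: b'_def ipQ_scale_left)
          then show ?thesis using res_orth[OF True] ir True by simp
        next
          case False
          then have jr: "j = r" using j by simp
          have "ipQ Q (b' i) (b' j) = ipQ Q res res / complex_of_real nr / complex_of_real nr"
            using ir jr by (simp add: b'_def ipQ_scale_left ipQ_scale_right)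
          also have "\<dots> = complex_of_real (nQ Q res / (nr * nr))"
            by (simp add: ipQ_self)
          also have "\<dots> = 1" using nr2 nrpos by (metis divide_self_if mult_pos_pos of_real_1 order_less_irrefl)
          finally show ?thesis using ir jr by simp
        qed
      qed
    qed
    have sp': "\<forall>j<Suc m. \<exists>c. \<forall>k\<in>Q. ys j k = (\<Sum>i<Suc r. c i * b' i k)"
    proof (intro allI impI)
      fix j assume j: "j < Suc m"
      show "\<exists>c. \<forall>k\<in>Q. ys j k = (\<Sum>i<Suc r. c i * b' i k)"
      proof (cases "j < m")
        case True
        then obtain c where c: "\<forall>k\<in>Q. ys j k = (\<Sum>i<r. c i * b i k)" using sp by blast
        show ?thesis
        proof (intro exI[of _ "c(r := 0)"] ballI)
          fix k assume "k \<in> Q"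
          have "(\<Sum>i<Suc r. (c(r := 0)) i * b' i k) = (\<Sum>i<r. c i * b i k)"
            by (simp add: b'lt)
          then show "ys j k = (\<Sum>i<Suc r. (c(r := 0)) i * b' i k)" using c \<open>k \<in> Q\<close> by simp
        qed
      next
        case False
        then have jm: "j = m" using j by simp
        show ?thesis
        proof (intro exI[of _ "p(r := complex_of_real nr)"] ballI)
          fix k assume "k \<in> Q"
          have "(\<Sum>i<Suc r. (p(r := complex_of_real nr)) i * b' i k)
              = (\<Sum>i<r. p i * b i k) + complex_of_real nr * (res k / complex_of_real nr)"
            by (simp add: b'lt b'_def)
          also have "\<dots> = y k" using nrpos unfolding res_def by simp
          finally show "ys j k = (\<Sum>i<Suc r. (p(r := complex_of_real nr)) i * b' i k)"
            using jm y_def by simp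
        qed
      qed
    qed
    show ?thesis using r ob' sp' by (intro exI[of _ "Suc r"]) auto
  qed
qed

lemma knapsack:
  fixes s p :: "'k \<Rightarrow> real"
  assumes fin: "finite Q" and JQ: "J \<subseteq> Q"
    and psum: "(\<Sum>k\<in>Q. p k) \<le> real (card J)"
    and p01: "\<And>k. k \<in> Q \<Longrightarrow> 0 \<le> p k \<and> p k \<le> 1"
    and s0: "\<And>k. k \<in> Q \<Longrightarrow> 0 \<le> s k"
    and ord: "\<And>k k'. k \<in> J \<Longrightarrow> k' \<in> Q - J \<Longrightarrow> s k' \<le> s k"
  shows "(\<Sum>k\<in>Q. s k * p k) \<le> (\<Sum>k\<in>J. s k)"
proof (cases "J = {}")
  case True
  then have "(\<Sum>k\<in>Q. p k) \<le> 0" using psum by simp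
  then have "\<forall>k\<in>Q. p k = 0"
    using sum_nonneg_eq_0_iff[OF fin, of p] p01 by (meson antisym sum_nonneg)
  then show ?thesis using True by simp
next
  case False
  have finJ: "finite J" using fin JQ finite_subset by blast
  define mu where "mu = Min (s ` J)"
  have mu_le: "mu \<le> s k" if "k \<in> J" for k unfolding mu_def using finJ that by simp
  have mu_ge: "s k' \<le> mu" if "k' \<in> Q - J" for k'
    unfolding mu_def using finJ False ord[OF _ that] by (simp add: Min_ge_iff)
  have mu0: "0 \<le> mu" using False JQ s0 mu_le by (metis all_not_in_conv order_trans subsetD s0 mu_def
        Min_in finJ finite_imageI image_is_empty imageE)
  have split: "(\<Sum>k\<in>Q. s k * p k) = (\<Sum>k\<in>J. s k * p k) + (\<Sum>k\<in>Q - J. s k * p k)"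
    using fin JQ by (metis add.commute sum.subset_diff)
  have psplit: "(\<Sum>k\<in>Q. p k) = (\<Sum>k\<in>J. p k) + (\<Sum>k\<in>Q - J. p k)"
    using fin JQ by (metis add.commute sum.subset_diff)
  have "(\<Sum>k\<in>Q - J. s k * p k) \<le> (\<Sum>k\<in>Q - J. mu * p k)"
    using p01 mu_ge by (intro sum_mono mult_right_mono) auto
  also have "\<dots> = mu * (\<Sum>k\<in>Q - J. p k)" by (simp add: sum_distrib_left)
  also have "\<dots> \<le> mu * (real (card J) - (\<Sum>k\<in>J. p k))"
    using psum psplit mu0 by (intro mult_left_mono) auto
  also have "\<dots> = (\<Sum>k\<in>J. mu * (1 - p k))"
    by (simp add: sum_distrib_left[symmetric] sum_subtractf algebra_simps)
  also have "\<dots> \<le> (\<Sum>k\<in>J. s k * (1 - p k))"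
    using p01 JQ mu_le by (intro sum_mono mult_right_mono) auto
  finally have "(\<Sum>k\<in>Q. s k * p k) \<le> (\<Sum>k\<in>J. s k * p k) + (\<Sum>k\<in>J. s k * (1 - p k))"
    using split by linarith
  also have "\<dots> = (\<Sum>k\<in>J. s k)" by (simp add: sum.distrib[symmetric] algebra_simps)
  finally show ?thesis .
qed

lemma nQ_cong: "(\<And>k. k \<in> Q \<Longrightarrow> f k = g k) \<Longrightarrow> nQ Q f = nQ Q g"
  unfolding nQ_def by (rule sum.cong) auto

lemma sum_sq_ip:
  assumes fin: "finite Q"
    and orth: "\<And>k k'. k \<in> Q \<Longrightarrow> k' \<in> Q \<Longrightarrow>
        (\<Sum>l<M. u l k * cnj (u l k')) = (if k = k' then complex_of_real (real M * s k) else 0)"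
  shows "(\<Sum>l<M. (cmod (ipQ Q (u l) g))\<^sup>2) = real M * (\<Sum>k\<in>Q. s k * (cmod (g k))\<^sup>2)"
proof -
  have "complex_of_real (\<Sum>l<M. (cmod (ipQ Q (u l) g))\<^sup>2) = (\<Sum>l<M. ipQ Q (u l) g * cnj (ipQ Q (u l) g))"
    by (simp only: of_real_sum complex_norm_square)
  also have "\<dots> = (\<Sum>l<M. \<Sum>k\<in>Q. \<Sum>k'\<in>Q. (cnj (g k) * g k') * (u l k * cnj (u l k')))"
    unfolding ipQ_def by (simp add: sum_product sum_distrib_left sum_distrib_right mult_ac)
  also have "\<dots> = (\<Sum>k\<in>Q. \<Sum>k'\<in>Q. (cnj (g k) * g k') * (\<Sum>l<M. u l k * cnj (u l k')))"
    by (simp add: sum_distrib_left sum.swap[of _ "{..<M}"])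
  also have "\<dots> = (\<Sum>k\<in>Q. \<Sum>k'\<in>Q. if k' = k then (cnj (g k) * g k) * complex_of_real (real M * s k) else 0)"
    by (intro sum.cong refl) (auto simp: orth)
  also have "\<dots> = (\<Sum>k\<in>Q. (cnj (g k) * g k) * complex_of_real (real M * s k))"
    using fin by (simp add: sum.delta')
  also have "\<dots> = complex_of_real (real M * (\<Sum>k\<in>Q. s k * (cmod (g k))\<^sup>2))"
  proof -
    have eqk: "(cnj (g k) * g k) * complex_of_real (real M * s k) = complex_of_real (real M * (s k * (cmod (g k))\<^sup>2))" for k
    proof -
      have h: "cnj (g k) * g k = complex_of_real ((cmod (g k))\<^sup>2)" by (metis complex_norm_square mult.commute)
      have h2: "(cmod (g k))\<^sup>2 * (real M * s k) = real M * (s k * (cmod (g k))\<^sup>2)" by simp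
      show ?thesis unfolding h of_real_mult[symmetric] h2 ..
    qed
    have "(\<Sum>k\<in>Q. (cnj (g k) * g k) * complex_of_real (real M * s k))
        = (\<Sum>k\<in>Q. complex_of_real (real M * (s k * (cmod (g k))\<^sup>2)))"
      using eqk by (intro sum.cong) auto
    also have "\<dots> = complex_of_real (real M * (\<Sum>k\<in>Q. s k * (cmod (g k))\<^sup>2))"
      by (simp only: of_real_sum sum_distrib_left)
    finally show ?thesis .
  qed
  finally show ?thesis using of_real_eq_iff by blast
qed

lemma core:
  fixes u ys :: "nat \<Rightarrow> 'k \<Rightarrow> complex" and a :: "nat \<Rightarrow> nat \<Rightarrow> complex" and s :: "'k \<Rightarrow> real"
  assumes fin: "finite Q" and JQ: "J \<subseteq> Q" and mJ: "m \<le> card J" and M: "0 < M"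
    and orth: "\<And>k k'. k \<in> Q \<Longrightarrow> k' \<in> Q \<Longrightarrow>
        (\<Sum>l<M. u l k * cnj (u l k')) = (if k = k' then complex_of_real (real M * s k) else 0)"
    and s0: "\<And>k. k \<in> Q \<Longrightarrow> 0 \<le> s k"
    and ord: "\<And>k k'. k \<in> J \<Longrightarrow> k' \<in> Q - J \<Longrightarrow> s k' \<le> s k"
  shows "\<exists>l<M. nQ Q (\<lambda>k. u l k - (\<Sum>j<m. a l j * ys j k)) \<ge> (\<Sum>k\<in>Q. s k) - (\<Sum>k\<in>J. s k)"
proof -
  obtain r b where r: "r \<le> m" and ob: "orthoN Q b r"
    and sp: "\<forall>j<m. \<exists>c. \<forall>k\<in>Q. ys j k = (\<Sum>i<r. c i * b i k)"
    using gram_schmidt[OF fin, of m ys] by blast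
  obtain C where C: "\<forall>j<m. \<forall>k\<in>Q. ys j k = (\<Sum>i<r. C j i * b i k)"
    using sp by metis
  define d where "d = (\<lambda>l i. \<Sum>j<m. a l j * C j i)"
  have vrep: "(\<Sum>j<m. a l j * ys j k) = (\<Sum>i<r. d l i * b i k)" if "k \<in> Q" for l k
  proof -
    have "(\<Sum>j<m. a l j * ys j k) = (\<Sum>j<m. a l j * (\<Sum>i<r. C j i * b i k))"
      using C that by (intro sum.cong) auto
    also have "\<dots> = (\<Sum>i<r. d l i * b i k)"
      unfolding d_def by (simp add: sum_distrib_left sum_distrib_right sum.swap[of _ "{..<m}"] mult_ac)
    finally show ?thesis .
  qed
  define E where "E = (\<lambda>l. nQ Q (\<lambda>k. u l k - (\<Sum>j<m. a l j * ys j k)))"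
  have El: "E l \<ge> nQ Q (u l) - (\<Sum>i<r. (cmod (ipQ Q (u l) (b i)))\<^sup>2)" for l
  proof -
    have "E l = nQ Q (\<lambda>k. u l k - (\<Sum>i<r. d l i * b i k))"
      unfolding E_def by (rule nQ_cong) (simp add: vrep)
    then show ?thesis using proj_ineq[OF ob, of "u l" "d l"] by simp
  qed
  have S1: "(\<Sum>l<M. nQ Q (u l)) = real M * (\<Sum>k\<in>Q. s k)"
  proof -
    have "(\<Sum>l<M. nQ Q (u l)) = (\<Sum>k\<in>Q. \<Sum>l<M. (cmod (u l k))\<^sup>2)"
      unfolding nQ_def by (rule sum.swap)
    also have "\<dots> = (\<Sum>k\<in>Q. real M * s k)"
    proof (rule sum.cong[OF refl])
      fix k assume k: "k \<in> Q"
      have "complex_of_real (\<Sum>l<M. (cmod (u l k))\<^sup>2) = (\<Sum>l<M. u l k * cnj (u l k))"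
        by (simp only: of_real_sum complex_norm_square)
      also have "\<dots> = complex_of_real (real M * s k)" using orth[OF k k] by simp
      finally show "(\<Sum>l<M. (cmod (u l k))\<^sup>2) = real M * s k" using of_real_eq_iff by blast
    qed
    finally show ?thesis by (simp add: sum_distrib_left)
  qed
  define p where "p = (\<lambda>k. \<Sum>i<r. (cmod (b i k))\<^sup>2)"
  have S2: "(\<Sum>l<M. \<Sum>i<r. (cmod (ipQ Q (u l) (b i)))\<^sup>2) = real M * (\<Sum>k\<in>Q. s k * p k)"
  proof -
    have "(\<Sum>l<M. \<Sum>i<r. (cmod (ipQ Q (u l) (b i)))\<^sup>2) = (\<Sum>i<r. \<Sum>l<M. (cmod (ipQ Q (u l) (b i)))\<^sup>2)"
      by (rule sum.swap)
    also have "\<dots> = (\<Sum>i<r. real M * (\<Sum>k\<in>Q. s k * (cmod (b i k))\<^sup>2))"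
      using sum_sq_ip[OF fin orth] by simp
    also have "\<dots> = real M * (\<Sum>k\<in>Q. s k * p k)"
      unfolding p_def by (simp add: sum_distrib_left sum.swap[of _ "{..<r}"])
    finally show ?thesis .
  qed
  have p01: "0 \<le> p k \<and> p k \<le> 1" if k: "k \<in> Q" for k
  proof
    show "0 \<le> p k" unfolding p_def by (simp add: sum_nonneg)
    define e where "e = (\<lambda>k'. if k' = k then (1::complex) else 0)"
    have "ipQ Q e (b i) = cnj (b i k)" for i
    proof -
      have "ipQ Q e (b i) = (\<Sum>ka\<in>Q. if ka = k then cnj (b i ka) else 0)"
        unfolding ipQ_def e_def by (intro sum.cong) auto
      then show ?thesis using fin k by simp
    qed
    moreover have "nQ Q e = 1"
    proof -
      have "nQ Q e = (\<Sum>ka\<in>Q. if ka = k then 1 else 0)"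
        unfolding nQ_def e_def by (intro sum.cong) auto
      then show ?thesis using fin k by simp
    qed
    ultimately show "p k \<le> 1" using bessel[OF ob, of e] unfolding p_def by simp
  qed
  have psum: "(\<Sum>k\<in>Q. p k) \<le> real (card J)"
  proof -
    have "(\<Sum>k\<in>Q. p k) = (\<Sum>i<r. nQ Q (b i))"
      unfolding p_def nQ_def by (rule sum.swap)
    also have "\<dots> = (\<Sum>i<r. 1)"
    proof (rule sum.cong[OF refl])
      fix i assume "i \<in> {..<r}"
      then have "ipQ Q (b i) (b i) = 1" using ob unfolding orthoN_def by simp
      then show "nQ Q (b i) = 1" by (simp add: ipQ_self)
    qed
    also have "\<dots> = real r" by simp
    finally show ?thesis using r mJ by simp
  qed
  have ks: "(\<Sum>k\<in>Q. s k * p k) \<le> (\<Sum>k\<in>J. s k)"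
    by (rule knapsack[OF fin JQ psum p01 s0 ord])
  have "(\<Sum>l<M. E l) \<ge> (\<Sum>l<M. nQ Q (u l) - (\<Sum>i<r. (cmod (ipQ Q (u l) (b i)))\<^sup>2))"
    by (intro sum_mono El)
  also have "(\<Sum>l<M. nQ Q (u l) - (\<Sum>i<r. (cmod (ipQ Q (u l) (b i)))\<^sup>2))
      = real M * (\<Sum>k\<in>Q. s k) - real M * (\<Sum>k\<in>Q. s k * p k)"
    by (simp add: sum_subtractf S1 S2)
  finally have tot0: "(\<Sum>l<M. E l) \<ge> real M * (\<Sum>k\<in>Q. s k) - real M * (\<Sum>k\<in>Q. s k * p k)" .
  have "real M * (\<Sum>k\<in>Q. s k * p k) \<le> real M * (\<Sum>k\<in>J. s k)" using ks by (intro mult_left_mono) auto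
  then have tot: "(\<Sum>l<M. E l) \<ge> real M * ((\<Sum>k\<in>Q. s k) - (\<Sum>k\<in>J. s k))"
    using tot0 by (simp add: right_diff_distrib)
  show ?thesis
  proof (rule ccontr)
    assume "\<not> ?thesis"
    then have "\<forall>l<M. E l < (\<Sum>k\<in>Q. s k) - (\<Sum>k\<in>J. s k)" unfolding E_def by auto
    then have "(\<Sum>l<M. E l) < (\<Sum>l<M. (\<Sum>k\<in>Q. s k) - (\<Sum>k\<in>J. s k))"
      using M by (intro sum_strict_mono) auto
    then show False using tot by simp
  qed
qed

definition ch :: "nat \<Rightarrow> int \<Rightarrow> complex" where
  "ch M a = cis (2 * pi * real_of_int a / real M)"

lemma ch_add: "ch M (a + b) = ch M a * ch M b"
  unfolding ch_def cis_mult by (simp add: add_divide_distrib algebra_simps)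

lemma ch_mult_nat: "ch M (int l * h) = ch M h ^ l"
proof -
  have "ch M h ^ l = cis (real l * (2 * pi * real_of_int h / real M))" unfolding ch_def by (rule Complex.DeMoivre)
  moreover have "real l * (2 * pi * real_of_int h / real M) = 2 * pi * real_of_int (int l * h) / real M" by simp
  ultimately show ?thesis unfolding ch_def by metis
qed

lemma ch_multiple: assumes "M > 0" shows "ch M (int M * c) = 1"
proof -
  have "2 * pi * real_of_int (int M * c) / real M = 2 * pi * real_of_int c"
    using assms by (simp add: field_simps)
  then show ?thesis unfolding ch_def by simp
qed

lemma ch_cong: assumes "M > 0" "int M dvd (a - b)" shows "ch M a = ch M b"
proof -
  obtain c where c: "a - b = int M * c" using assms by (auto elim: dvdE)
  have "ch M a = ch M (b + int M * c)" using c by (simp add: algebra_simps)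
  also have "\<dots> = ch M b" using ch_multiple[OF assms(1)] by (simp add: ch_add)
  finally show ?thesis .
qed

lemma ch_cnj: "cnj (ch M a) = ch M (- a)"
  unfolding ch_def cis_cnj by simp

lemma ch_ne_1: fixes h :: int assumes "M > 0" "\<not> int M dvd h" shows "ch M h \<noteq> 1"
proof
  assume "ch M h = 1"
  then have "exp (\<i> * complex_of_real (2 * pi * real_of_int h / real M)) = 1"
    unfolding ch_def cis_conv_exp .
  then obtain n :: int where n: "Im (\<i> * complex_of_real (2 * pi * real_of_int h / real M)) = of_int (2 * n) * pi"
    unfolding exp_eq_1 by blast
  then have "2 * pi * real_of_int h / real M = 2 * pi * of_int n" by simp
  then have "real_of_int h = real M * of_int n" using assms(1) by (simp add: field_simps)
  then have "h = int M * n" by (metis of_int_eq_iff of_int_mult of_int_of_nat_eq)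
  then show False using assms(2) by simp
qed

lemma ch_sum:
  fixes h :: int
  assumes "M > 0"
  shows "(\<Sum>l<M. ch M (int l * h)) = (if int M dvd h then of_nat M else 0)"
proof (cases "int M dvd h")
  case True
  then obtain c where "h = int M * c" by (auto elim: dvdE)
  then have "ch M (int l * h) = 1" for l using ch_multiple[OF assms, of "int l * c"]
    by (simp add: algebra_simps)
  then show ?thesis using True by simp
next
  case False
  define \<omega> where "\<omega> = ch M h"
  have w1: "\<omega> \<noteq> 1" using ch_ne_1[OF assms False] unfolding \<omega>_def .
  have wM: "\<omega> ^ M = 1" unfolding \<omega>_def using ch_mult_nat[of M M h] ch_multiple[OF assms, of h] by simp
  have "(\<Sum>l<M. ch M (int l * h)) = (\<Sum>l<M. \<omega> ^ l)" by (simp add: ch_mult_nat \<omega>_def)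
  also have "\<dots> = (\<omega> ^ M - 1) / (\<omega> - 1)" using w1 by (rule geometric_sum)
  also have "\<dots> = 0" using wM by simp
  finally show ?thesis using False by simp
qed

lemma if0_mult: "(if P then (a::'a::mult_zero) else 0) * b = (if P then a * b else 0)"
  by simp

lemma dvd_mod_diff: "int M dvd ((x::int) mod int M - x)"
proof -
  have "x mod int M - x = - (x div int M * int M)" by (simp add: minus_div_mult_eq_mod[symmetric])
  then show ?thesis by simp
qed

definition kz :: "int^'d::finite \<Rightarrow> int^'d \<Rightarrow> int" where
  "kz z k = (\<Sum>i\<in>UNIV. k $ i * z $ i)"

lemma kz_diff: "kz z (k - k') = kz z k - kz z k'"
  unfolding kz_def by (simp add: algebra_simps sum_subtractf)

lemma exists_inj_kz:
  fixes Q :: "(int^'d::finite) set"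
  assumes "finite Q"
  shows "\<exists>z. inj_on (kz z) Q"
proof -
  obtain f :: "'d \<Rightarrow> nat" where f: "inj f"
    using finite_imp_inj_to_nat_seg[of "UNIV :: 'd set"] by auto
  define N where "N = Max (range f)"
  have fN: "f i \<le> N" for i unfolding N_def by simp
  define D where "D = {k - k' | k k'. k \<in> Q \<and> k' \<in> Q \<and> k \<noteq> k'}"
  have finD: "finite D"
  proof -
    have "D = (\<lambda>(k, k'). k - k') ` {(k, k'). k \<in> Q \<and> k' \<in> Q \<and> k \<noteq> k'}" unfolding D_def by auto
    moreover have "finite {(k, k'). k \<in> Q \<and> k' \<in> Q \<and> k \<noteq> k'}"
      by (rule finite_subset[of _ "Q \<times> Q"]) (use assms in auto)
    ultimately show ?thesis by simp
  qed
  define cf where "cf = (\<lambda>h::int^'d. \<lambda>j. (\<Sum>i\<in>UNIV. if f i = j then real_of_int (h $ i) else 0))"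
  have poly_eq: "(\<Sum>j\<le>N. cf h j * x ^ j) = (\<Sum>i\<in>UNIV. real_of_int (h $ i) * x ^ f i)" for h x
  proof -
    have "(\<Sum>j\<le>N. cf h j * x ^ j) = (\<Sum>i\<in>UNIV. \<Sum>j\<le>N. if f i = j then real_of_int (h $ i) * x ^ j else 0)"
      unfolding cf_def by (simp only: sum_distrib_right if0_mult sum.swap[of _ "{..N}"])
    also have "\<dots> = (\<Sum>i\<in>UNIV. real_of_int (h $ i) * x ^ f i)"
      by (intro sum.cong refl) (simp add: sum.delta' fN)
    finally show ?thesis .
  qed
  have fin_roots: "finite {x::real. (\<Sum>j\<le>N. cf h j * x ^ j) = 0}" if "h \<in> D" for h
  proof -
    from that have "h \<noteq> 0" unfolding D_def by auto
    then obtain i0 where i0: "h $ i0 \<noteq> 0" by (metis vec_eq_iff zero_index)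
    have "cf h (f i0) = (\<Sum>i\<in>UNIV. if i = i0 then real_of_int (h $ i) else 0)"
      unfolding cf_def using f by (intro sum.cong refl) (auto simp: inj_eq)
    also have "\<dots> = real_of_int (h $ i0)" by simp
    finally have "cf h (f i0) \<noteq> 0" using i0 by simp
    then show ?thesis using polyfun_finite_roots[where n = N and c = "cf h"] fN by blast
  qed
  define R where "R = (\<Union>h\<in>D. {x::real. (\<Sum>j\<le>N. cf h j * x ^ j) = 0})"
  have finR: "finite R" unfolding R_def using finD fin_roots by blast
  have "finite (of_int -` R :: int set)" using finR by (rule finite_vimageI) (simp add: inj_on_def)
  then obtain T :: int where T: "T \<notin> of_int -` R"
    using infinite_UNIV_int by (metis ex_new_if_finite)
  define z where "z = (\<chi> i. T ^ f i)"
  have "inj_on (kz z) Q"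
  proof (rule inj_onI, rule ccontr)
    fix k k' assume k: "k \<in> Q" "k' \<in> Q" "kz z k = kz z k'" "k \<noteq> k'"
    then have hD: "k - k' \<in> D" unfolding D_def by blast
    have "kz z (k - k') = 0" using k by (simp add: kz_diff)
    then have "real_of_int (kz z (k - k')) = 0" by simp
    moreover have "real_of_int (kz z (k - k')) = (\<Sum>i\<in>UNIV. real_of_int ((k - k') $ i) * real_of_int T ^ f i)"
      by (simp only: kz_def z_def vec_lambda_beta of_int_sum of_int_mult of_int_power)
    ultimately have "(\<Sum>j\<le>N. cf (k - k') j * real_of_int T ^ j) = 0" using poly_eq[of "k - k'" "real_of_int T"] by simp
    then have "real_of_int T \<in> R" unfolding R_def using hD by blast
    then show False using T by simp
  qed
  then show ?thesis by blast
qed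

lemma exists_lattice:
  fixes Q :: "(int^'d::finite) set"
  assumes "finite Q"
  shows "\<exists>M>0. \<exists>z. \<forall>k\<in>Q. \<forall>k'\<in>Q. int M dvd (kz z k - kz z k') \<longrightarrow> k = k'"
proof -
  obtain z where z: "inj_on (kz z) Q" using exists_inj_kz[OF assms] by blast
  define B where "B = Max (insert 0 ((\<lambda>k. \<bar>kz z k\<bar>) ` Q))"
  have B: "\<bar>kz z k\<bar> \<le> B" if "k \<in> Q" for k unfolding B_def using assms that by simp
  have B0: "B \<ge> 0" unfolding B_def using assms by simp
  define M where "M = nat (2 * B + 1)"
  have M: "int M = 2 * B + 1" unfolding M_def using B0 by simp
  have "\<forall>k\<in>Q. \<forall>k'\<in>Q. int M dvd (kz z k - kz z k') \<longrightarrow> k = k'"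
  proof (intro ballI impI)
    fix k k' assume k: "k \<in> Q" "k' \<in> Q" and d: "int M dvd (kz z k - kz z k')"
    have lt: "\<bar>kz z k - kz z k'\<bar> < int M" using B[OF k(1)] B[OF k(2)] M by linarith
    have "kz z k - kz z k' = 0"
    proof (rule ccontr)
      assume "kz z k - kz z k' \<noteq> 0"
      then have "\<bar>int M\<bar> \<le> \<bar>kz z k - kz z k'\<bar>" using d by (meson dvd_imp_le_int)
      then show False using lt by linarith
    qed
    then show "k = k'" using z k unfolding inj_on_def by simp
  qed
  moreover have "M > 0" using M B0 by linarith
  ultimately show ?thesis by blast
qed

definition tg :: "nat \<Rightarrow> int^'d::finite \<Rightarrow> nat \<Rightarrow> real^'d" where
  "tg M z l = (\<chi> i. 2 * pi * real_of_int ((int l * z $ i) mod int M) / real M)"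

lemma tg_torus: assumes "M > 0" shows "tg M z l \<in> torus"
proof -
  have "0 \<le> tg M z l $ i \<and> tg M z l $ i < 2 * pi" for i
  proof -
    have a: "0 \<le> (int l * z $ i) mod int M" "(int l * z $ i) mod int M < int M" using assms by auto
    then have "real_of_int ((int l * z $ i) mod int M) < real_of_int (int M)" by (simp only: of_int_less_iff)
    then have b: "real_of_int ((int l * z $ i) mod int M) < real M" by (metis of_int_of_nat_eq)
    have gen: "\<And>r::real. 0 \<le> r \<Longrightarrow> r < real M \<Longrightarrow> 0 \<le> 2 * pi * r / real M \<and> 2 * pi * r / real M < 2 * pi"
      using assms by (auto simp: field_simps)
    have c: "0 \<le> real_of_int ((int l * z $ i) mod int M)" using a(1) by (simp only: of_int_nonneg)
    show ?thesis unfolding tg_def vec_lambda_beta by (rule gen[OF c b])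
  qed
  then show ?thesis unfolding torus_def by blast
qed

lemma exp_kdot_tg:
  assumes "M > 0"
  shows "exp (\<i> * complex_of_real (kdot k (tg M z l))) = ch M (int l * kz z k)"
proof -
  define e where "e = (\<Sum>i\<in>UNIV. k $ i * ((int l * z $ i) mod int M))"
  have kd: "kdot k (tg M z l) = 2 * pi * real_of_int e / real M"
    unfolding kdot_def tg_def e_def by (simp add: sum_divide_distrib sum_distrib_left mult_ac)
  have "exp (\<i> * complex_of_real (kdot k (tg M z l))) = ch M e"
    unfolding kd ch_def cis_conv_exp by (simp add: mult_ac)
  also have "\<dots> = ch M (int l * kz z k)"
  proof (rule ch_cong[OF assms])
    have "e - int l * kz z k = (\<Sum>i\<in>UNIV. k $ i * ((int l * z $ i) mod int M - int l * z $ i))"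
      unfolding e_def kz_def by (simp add: algebra_simps sum_subtractf sum_distrib_left)
    moreover have "int M dvd (\<Sum>i\<in>UNIV. k $ i * ((int l * z $ i) mod int M - int l * z $ i))"
      by (intro dvd_sum dvd_mult) (rule dvd_mod_diff)
    ultimately show "int M dvd (e - int l * kz z k)" by simp
  qed
  finally show ?thesis .
qed

lemma lattice_orth:
  assumes M: "M > 0" and inj: "\<forall>k\<in>Q. \<forall>k'\<in>Q. int M dvd (kz z k - kz z k') \<longrightarrow> k = k'"
    and k: "k \<in> Q" "k' \<in> Q" and sg: "sg = 1 \<or> sg = -1"
  shows "(\<Sum>l<M. (complex_of_real (\<sigma> k) * ch M (int l * (sg * kz z k))) *
                  cnj (complex_of_real (\<sigma> k') * ch M (int l * (sg * kz z k'))))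
       = (if k = k' then complex_of_real (real M * (\<sigma> k)\<^sup>2) else 0)"
proof -
  have "(\<Sum>l<M. (complex_of_real (\<sigma> k) * ch M (int l * (sg * kz z k))) *
                  cnj (complex_of_real (\<sigma> k') * ch M (int l * (sg * kz z k'))))
      = complex_of_real (\<sigma> k * \<sigma> k') * (\<Sum>l<M. ch M (int l * (sg * (kz z k - kz z k'))))"
    by (simp add: sum_distrib_left ch_cnj ch_add[symmetric] algebra_simps)
  also have "\<dots> = complex_of_real (\<sigma> k * \<sigma> k') * (if int M dvd (sg * (kz z k - kz z k')) then of_nat M else 0)"
    using ch_sum[OF M] by simp
  also have "\<dots> = (if k = k' then complex_of_real (real M * (\<sigma> k)\<^sup>2) else 0)"
  proof -
    have "int M dvd (sg * (kz z k - kz z k')) \<longleftrightarrow> int M dvd (kz z k - kz z k')"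
    proof (cases "sg = 1")
      case True then show ?thesis by simp
    next
      case False
      then have "sg * (kz z k - kz z k') = - (kz z k - kz z k')" using sg by simp
      then show ?thesis by (simp only: dvd_minus_iff)
    qed
    then show ?thesis using inj k by (auto simp: power2_eq_square)
  qed
  finally show ?thesis .
qed

lemma sq_diff_le2: "(cmod (a - b))\<^sup>2 \<le> 2 * (cmod a)\<^sup>2 + 2 * (cmod b)\<^sup>2"
proof -
  have "cmod (a - b) \<le> cmod a + cmod b" by (rule norm_triangle_ineq4)
  then have "(cmod (a - b))\<^sup>2 \<le> (cmod a + cmod b)\<^sup>2" by (simp add: power_mono)
  also have "\<dots> \<le> 2 * (cmod a)\<^sup>2 + 2 * (cmod b)\<^sup>2"
  proof -
    have "0 \<le> (cmod a - cmod b)\<^sup>2" by simp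
    then show ?thesis by (simp add: power2_eq_square algebra_simps)
  qed
  finally show ?thesis .
qed

lemma summable_comp_real:
  fixes f g :: "'a \<Rightarrow> real"
  assumes "f summable_on A" "\<And>x. x \<in> A \<Longrightarrow> g x \<le> f x" "\<And>x. x \<in> A \<Longrightarrow> 0 \<le> g x"
  shows "g summable_on A"
  by (rule summable_on_comparison_test[OF assms])

lemma weighted_bounded:
  fixes v :: "'a \<Rightarrow> real" and c :: "'a \<Rightarrow> complex"
  assumes sv: "(\<lambda>k. (v k)\<^sup>2) summable_on UNIV" and cb: "\<And>k. cmod (c k) \<le> B"
  shows "(\<lambda>k. (v k)\<^sup>2 * (cmod (c k))\<^sup>2) summable_on UNIV"
    and "(\<Sum>\<^sub>\<infinity>k. (v k)\<^sup>2 * (cmod (c k))\<^sup>2) \<le> B\<^sup>2 * (\<Sum>\<^sub>\<infinity>k. (v k)\<^sup>2)"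
proof -
  have le: "(v k)\<^sup>2 * (cmod (c k))\<^sup>2 \<le> B\<^sup>2 * (v k)\<^sup>2" for k
  proof -
    have "(cmod (c k))\<^sup>2 \<le> B\<^sup>2" using cb[of k] by (simp add: power_mono)
    then show ?thesis by (metis mult.commute mult_left_mono zero_le_power2)
  qed
  have s2: "(\<lambda>k. B\<^sup>2 * (v k)\<^sup>2) summable_on UNIV" using sv by (rule summable_on_cmult_right)
  show s1: "(\<lambda>k. (v k)\<^sup>2 * (cmod (c k))\<^sup>2) summable_on UNIV"
    by (rule summable_comp_real[OF s2]) (use le in auto)
  have "(\<Sum>\<^sub>\<infinity>k. (v k)\<^sup>2 * (cmod (c k))\<^sup>2) \<le> (\<Sum>\<^sub>\<infinity>k. B\<^sup>2 * (v k)\<^sup>2)"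
    by (rule infsum_mono[OF s1 s2 le])
  also have "\<dots> = B\<^sup>2 * (\<Sum>\<^sub>\<infinity>k. (v k)\<^sup>2)" by (rule infsum_cmult_right) (use sv in auto)
  finally show "(\<Sum>\<^sub>\<infinity>k. (v k)\<^sup>2 * (cmod (c k))\<^sup>2) \<le> B\<^sup>2 * (\<Sum>\<^sub>\<infinity>k. (v k)\<^sup>2)" .
qed

lemma weighted_diff:
  fixes v :: "'a \<Rightarrow> real" and a b :: "'a \<Rightarrow> complex"
  assumes sa: "(\<lambda>k. (v k)\<^sup>2 * (cmod (a k))\<^sup>2) summable_on UNIV"
    and sb: "(\<lambda>k. (v k)\<^sup>2 * (cmod (b k))\<^sup>2) summable_on UNIV"
  shows "(\<lambda>k. (v k)\<^sup>2 * (cmod (a k - b k))\<^sup>2) summable_on UNIV"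
    and "(\<Sum>\<^sub>\<infinity>k. (v k)\<^sup>2 * (cmod (a k - b k))\<^sup>2)
         \<le> 2 * (\<Sum>\<^sub>\<infinity>k. (v k)\<^sup>2 * (cmod (a k))\<^sup>2) + 2 * (\<Sum>\<^sub>\<infinity>k. (v k)\<^sup>2 * (cmod (b k))\<^sup>2)"
proof -
  have le: "(v k)\<^sup>2 * (cmod (a k - b k))\<^sup>2 \<le> 2 * ((v k)\<^sup>2 * (cmod (a k))\<^sup>2) + 2 * ((v k)\<^sup>2 * (cmod (b k))\<^sup>2)" for k
  proof -
    have "(v k)\<^sup>2 * (cmod (a k - b k))\<^sup>2 \<le> (v k)\<^sup>2 * (2 * (cmod (a k))\<^sup>2 + 2 * (cmod (b k))\<^sup>2)"
      by (rule mult_left_mono[OF sq_diff_le2]) simp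
    then show ?thesis by (simp add: algebra_simps)
  qed
  have s2a: "(\<lambda>k. 2 * ((v k)\<^sup>2 * (cmod (a k))\<^sup>2)) summable_on UNIV" using sa by (rule summable_on_cmult_right)
  have s2b: "(\<lambda>k. 2 * ((v k)\<^sup>2 * (cmod (b k))\<^sup>2)) summable_on UNIV" using sb by (rule summable_on_cmult_right)
  have s2: "(\<lambda>k. 2 * ((v k)\<^sup>2 * (cmod (a k))\<^sup>2) + 2 * ((v k)\<^sup>2 * (cmod (b k))\<^sup>2)) summable_on UNIV"
    by (rule summable_on_add[OF s2a s2b])
  show s1: "(\<lambda>k. (v k)\<^sup>2 * (cmod (a k - b k))\<^sup>2) summable_on UNIV"
    by (rule summable_comp_real[OF s2]) (use le in auto)
  have "(\<Sum>\<^sub>\<infinity>k. (v k)\<^sup>2 * (cmod (a k - b k))\<^sup>2)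
      \<le> (\<Sum>\<^sub>\<infinity>k. 2 * ((v k)\<^sup>2 * (cmod (a k))\<^sup>2) + 2 * ((v k)\<^sup>2 * (cmod (b k))\<^sup>2))"
    by (rule infsum_mono[OF s1 s2 le])
  also have "\<dots> = (\<Sum>\<^sub>\<infinity>k. 2 * ((v k)\<^sup>2 * (cmod (a k))\<^sup>2)) + (\<Sum>\<^sub>\<infinity>k. 2 * ((v k)\<^sup>2 * (cmod (b k))\<^sup>2))"
    by (rule infsum_add[OF s2a s2b])
  also have "\<dots> = 2 * (\<Sum>\<^sub>\<infinity>k. (v k)\<^sup>2 * (cmod (a k))\<^sup>2) + 2 * (\<Sum>\<^sub>\<infinity>k. (v k)\<^sup>2 * (cmod (b k))\<^sup>2)"
    using sa sb by (simp add: infsum_cmult_right)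
  finally show "(\<Sum>\<^sub>\<infinity>k. (v k)\<^sup>2 * (cmod (a k - b k))\<^sup>2)
         \<le> 2 * (\<Sum>\<^sub>\<infinity>k. (v k)\<^sup>2 * (cmod (a k))\<^sup>2) + 2 * (\<Sum>\<^sub>\<infinity>k. (v k)\<^sup>2 * (cmod (b k))\<^sup>2)" .
qed

lemma F_norm_sq:
  "(F_norm v c)\<^sup>2 = (\<Sum>\<^sub>\<infinity>k. (v k)\<^sup>2 * (cmod (c k))\<^sup>2)"
proof -
  have "0 \<le> (\<Sum>\<^sub>\<infinity>k. (v k)\<^sup>2 * (cmod (c k))\<^sup>2)" by (rule Infinite_Sum.infsum_nonneg) simp
  then show ?thesis unfolding F_norm_def by simp
qed

lemma F_norm_nonneg: "F_norm v c \<ge> 0"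
  unfolding F_norm_def by (rule real_sqrt_ge_zero, rule Infinite_Sum.infsum_nonneg) simp

lemma F_norm_diff_le:
  assumes sa: "(\<lambda>k. (v k)\<^sup>2 * (cmod (a k))\<^sup>2) summable_on UNIV"
    and sb: "(\<lambda>k. (v k)\<^sup>2 * (cmod (b k))\<^sup>2) summable_on UNIV"
  shows "F_norm v (\<lambda>k. a k - b k) \<le> 2 * (F_norm v a + F_norm v b)"
proof -
  have "(F_norm v (\<lambda>k. a k - b k))\<^sup>2 \<le> 2 * (F_norm v a)\<^sup>2 + 2 * (F_norm v b)\<^sup>2"
    using weighted_diff(2)[OF sa sb] by (simp add: F_norm_sq)
  also have "\<dots> \<le> (2 * (F_norm v a + F_norm v b))\<^sup>2"
    using F_norm_nonneg[of v a] F_norm_nonneg[of v b] by (simp add: power2_eq_square algebra_simps)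
  finally show ?thesis
    using F_norm_nonneg[of v a] F_norm_nonneg[of v b] power2_le_imp_le by fastforce
qed

lemma finite_le_infsum:
  fixes f :: "'a \<Rightarrow> real"
  assumes "f summable_on UNIV" "finite F" "\<And>x. 0 \<le> f x"
  shows "sum f F \<le> (\<Sum>\<^sub>\<infinity>x. f x)"
  by (rule finite_sum_le_infsum) (use assms in auto)

lemma cs_infsum:
  fixes g h :: "'a \<Rightarrow> real"
  assumes sg: "(\<lambda>k. (g k)\<^sup>2) summable_on UNIV" and sh: "(\<lambda>k. (h k)\<^sup>2) summable_on UNIV"
  shows "(\<lambda>k. \<bar>g k * h k\<bar>) summable_on UNIV"
    and "(\<Sum>\<^sub>\<infinity>k. \<bar>g k * h k\<bar>) \<le> sqrt (\<Sum>\<^sub>\<infinity>k. (g k)\<^sup>2) * sqrt (\<Sum>\<^sub>\<infinity>k. (h k)\<^sup>2)"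
proof -
  define C where "C = sqrt (\<Sum>\<^sub>\<infinity>k. (g k)\<^sup>2) * sqrt (\<Sum>\<^sub>\<infinity>k. (h k)\<^sup>2)"
  have fin: "sum (\<lambda>k. \<bar>g k * h k\<bar>) F \<le> C" if "finite F" for F
  proof -
    have "sum (\<lambda>k. \<bar>g k * h k\<bar>) F = (\<Sum>k\<in>F. \<bar>g k\<bar> * \<bar>h k\<bar>)" by (simp add: abs_mult)
    also have "\<dots> \<le> L2_set g F * L2_set h F" by (rule L2_set_mult_ineq)
    also have "\<dots> \<le> C" unfolding C_def L2_set_def
      by (intro mult_mono real_sqrt_le_mono finite_le_infsum sg sh that) (auto simp: sum_nonneg intro!: Infinite_Sum.infsum_nonneg)
    finally show ?thesis .
  qed
  show s: "(\<lambda>k. \<bar>g k * h k\<bar>) summable_on UNIV"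
    by (rule nonneg_bdd_above_summable_on) (use fin in \<open>auto simp: bdd_above_def\<close>)
  show "(\<Sum>\<^sub>\<infinity>k. \<bar>g k * h k\<bar>) \<le> sqrt (\<Sum>\<^sub>\<infinity>k. (g k)\<^sup>2) * sqrt (\<Sum>\<^sub>\<infinity>k. (h k)\<^sup>2)"
    using infsum_le_finite_sums[OF s fin] unfolding C_def by simp
qed

lemma A_diff:
  fixes a b :: "'d::finite coeffs"
  assumes sa: "(\<lambda>k. cmod (a k)) summable_on UNIV" and sb: "(\<lambda>k. cmod (b k)) summable_on UNIV"
  shows "(\<lambda>k. cmod (a k - b k)) summable_on UNIV"
    and "A_norm (\<lambda>k. a k - b k) \<le> A_norm a + A_norm b"
proof -
  have s2: "(\<lambda>k. cmod (a k) + cmod (b k)) summable_on UNIV" by (rule summable_on_add[OF sa sb])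
  show s1: "(\<lambda>k. cmod (a k - b k)) summable_on UNIV"
    by (rule summable_comp_real[OF s2]) (auto simp: norm_triangle_ineq4)
  have "A_norm (\<lambda>k. a k - b k) \<le> (\<Sum>\<^sub>\<infinity>k. cmod (a k) + cmod (b k))"
    unfolding A_norm_def by (rule infsum_mono[OF s1 s2]) (simp add: norm_triangle_ineq4)
  also have "\<dots> = A_norm a + A_norm b" unfolding A_norm_def by (rule infsum_add[OF sa sb])
  finally show "A_norm (\<lambda>k. a k - b k) \<le> A_norm a + A_norm b" .
qed

lemma A_norm_nonneg: "A_norm a \<ge> 0"
  unfolding A_norm_def by (rule Infinite_Sum.infsum_nonneg) simp

lemma Fw_in_l1:
  fixes w :: "int^'d::finite \<Rightarrow> real" and x :: "'d coeffs"
  assumes wpos: "\<And>k. w k > 0" and sw: "(\<lambda>k. 1 / (w k)\<^sup>2) summable_on UNIV"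
    and sx: "(\<lambda>k. (w k)\<^sup>2 * (cmod (x k))\<^sup>2) summable_on UNIV"
  shows "(\<lambda>k. cmod (x k)) summable_on UNIV"
    and "A_norm x \<le> sqrt (\<Sum>\<^sub>\<infinity>k. 1 / (w k)\<^sup>2) * F_norm w x"
proof -
  define g where "g = (\<lambda>k. 1 / w k)"
  define h where "h = (\<lambda>k. w k * cmod (x k))"
  have gh: "\<bar>g k * h k\<bar> = cmod (x k)" for k using wpos[of k] unfolding g_def h_def by simp
  have sg: "(\<lambda>k. (g k)\<^sup>2) summable_on UNIV" using sw unfolding g_def by (simp add: power_divide)
  have sh: "(\<lambda>k. (h k)\<^sup>2) summable_on UNIV" using sx unfolding h_def by (simp add: power_mult_distrib)
  show "(\<lambda>k. cmod (x k)) summable_on UNIV" using cs_infsum(1)[OF sg sh] gh by simp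
  have "A_norm x = (\<Sum>\<^sub>\<infinity>k. \<bar>g k * h k\<bar>)" unfolding A_norm_def gh ..
  also have "\<dots> \<le> sqrt (\<Sum>\<^sub>\<infinity>k. (g k)\<^sup>2) * sqrt (\<Sum>\<^sub>\<infinity>k. (h k)\<^sup>2)" by (rule cs_infsum(2)[OF sg sh])
  also have "\<dots> = sqrt (\<Sum>\<^sub>\<infinity>k. 1 / (w k)\<^sup>2) * F_norm w x"
    unfolding g_def h_def F_norm_def by (simp add: power_divide power_mult_distrib)
  finally show "A_norm x \<le> sqrt (\<Sum>\<^sub>\<infinity>k. 1 / (w k)\<^sup>2) * F_norm w x" .
qed

lemma infinite_vec_int: "infinite (UNIV :: (int^'d::finite) set)"
proof
  assume fin: "finite (UNIV :: (int^'d) set)"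
  have inj: "inj (\<lambda>n::int. (\<chi> i::'d. n))"
  proof (rule injI)
    fix x y :: int assume "(\<chi> i::'d. x) = (\<chi> i::'d. y)"
    then have "(\<chi> i::'d. x) $ undefined = (\<chi> i::'d. y) $ undefined" by (rule arg_cong)
    then show "x = y" by (simp only: vec_lambda_beta)
  qed
  have "finite (range (\<lambda>n::int. (\<chi> i::'d. n)))" by (rule finite_subset[OF subset_UNIV fin])
  then have "finite (UNIV :: int set)" by (rule finite_imageD[OF _ inj])
  then show False by simp
qed

lemma finite_ge:
  fixes s :: "'a \<Rightarrow> real"
  assumes ss: "s summable_on UNIV" and s0: "\<And>k. 0 \<le> s k" and e: "e > 0"
  shows "finite {k. e \<le> s k}"
proof (rule ccontr)
  assume inf: "infinite {k. e \<le> s k}"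
  obtain N :: nat where N: "(\<Sum>\<^sub>\<infinity>k. s k) / e < real N" using reals_Archimedean2 by blast
  obtain F where F: "F \<subseteq> {k. e \<le> s k}" "finite F" "card F = N"
    using infinite_arbitrarily_large[OF inf] by blast
  have "real N * e = (\<Sum>k\<in>F. e)" using F by simp
  also have "\<dots> \<le> (\<Sum>k\<in>F. s k)" using F by (intro sum_mono) auto
  also have "\<dots> \<le> (\<Sum>\<^sub>\<infinity>k. s k)" by (rule finite_le_infsum[OF ss F(2) s0])
  finally have a: "real N * e \<le> (\<Sum>\<^sub>\<infinity>k. s k)" .
  have b: "(\<Sum>\<^sub>\<infinity>k. s k) < real N * e" using N e by (simp add: divide_less_eq)
  show False using a b by linarith
qed

lemma exists_J:
  fixes s :: "'a \<Rightarrow> real"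
  assumes ss: "s summable_on UNIV" and s0: "\<And>k. 0 < s k" and inf: "infinite (UNIV :: 'a set)"
  shows "\<exists>J. finite J \<and> card J = p \<and> (\<forall>k\<in>J. \<forall>k'. k' \<notin> J \<longrightarrow> s k' \<le> s k)"
proof (induction p)
  case 0
  have "finite ({}::'a set) \<and> card ({}::'a set) = 0 \<and> (\<forall>k\<in>{}. \<forall>k'. k' \<notin> {} \<longrightarrow> s k' \<le> s k)" by simp
  then show ?case by blast
next
  case (Suc p)
  from Suc.IH obtain J where J1: "finite J" and J2: "card J = p"
    and J3: "\<forall>k\<in>J. \<forall>k'. k' \<notin> J \<longrightarrow> s k' \<le> s k" by blast
  obtain k0 where k0: "k0 \<notin> J" using ex_new_if_finite[OF inf J1] by blast
  define S where "S = {k. k \<notin> J \<and> s k0 \<le> s k}"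
  have s0': "\<And>k. 0 \<le> s k" using s0 less_imp_le by blast
  have "finite {k. s k0 \<le> s k}" by (rule finite_ge[OF ss s0' s0[of k0]])
  moreover have "S \<subseteq> {k. s k0 \<le> s k}" unfolding S_def by blast
  ultimately have finS: "finite S" by (rule finite_subset[rotated])
  have k0S: "k0 \<in> S" unfolding S_def using k0 by blast
  have "S \<noteq> {}" using k0S by blast
  then have "Max (s ` S) \<in> s ` S" using finS by (intro Max_in) auto
  then obtain k where kk0: "Max (s ` S) = s k" and kS: "k \<in> S" by (rule imageE)
  have kk: "s k = Max (s ` S)" using kk0 by (rule sym)
  have kmax: "s k' \<le> s k" if "k' \<in> S" for k'
  proof -
    have "s k' \<le> Max (s ` S)" using finS that by (intro Max_ge) auto
    then show ?thesis using kk by linarith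
  qed
  have kJ: "k \<notin> J" and kk0: "s k0 \<le> s k" using kS unfolding S_def by auto
  have ord: "\<forall>k1\<in>insert k J. \<forall>k'. k' \<notin> insert k J \<longrightarrow> s k' \<le> s k1"
  proof (intro ballI allI impI)
    fix k1 k' assume k1: "k1 \<in> insert k J" and k': "k' \<notin> insert k J"
    then have k'J: "k' \<notin> J" and k'k: "k' \<noteq> k" by auto
    show "s k' \<le> s k1"
    proof (cases "k1 = k")
      case True
      show ?thesis
      proof (cases "s k0 \<le> s k'")
        case True
        then have "k' \<in> S" unfolding S_def using k'J by blast
        then show ?thesis using kmax \<open>k1 = k\<close> by blast
      next
        case False
        then have "s k' \<le> s k" using kk0 by linarith
        then show ?thesis using \<open>k1 = k\<close> by simp
      qed
    next
      case False
      then have "k1 \<in> J" using k1 by blast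
      then show ?thesis using J3 k'J by blast
    qed
  qed
  have "finite (insert k J)" using J1 by blast
  moreover have "card (insert k J) = Suc p" using J1 J2 kJ by simp
  ultimately show ?case using ord by blast
qed

lemma tail_bound:
  fixes s :: "'a \<Rightarrow> real"
  assumes ss: "s summable_on UNIV" and s0: "\<And>k. 0 \<le> s k" and finJ: "finite J"
    and H: "\<And>Q. finite Q \<Longrightarrow> J \<subseteq> Q \<Longrightarrow> (\<Sum>k\<in>Q. s k) - (\<Sum>k\<in>J. s k) \<le> X"
  shows "(\<Sum>\<^sub>\<infinity>k. if k \<in> J then 0 else s k) \<le> X"
proof -
  have st: "(\<lambda>k. if k \<in> J then 0 else s k) summable_on UNIV"
    by (rule summable_comp_real[OF ss]) (auto simp: s0)
  show ?thesis
  proof (rule infsum_le_finite_sums[OF st])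
    fix F :: "'a set" assume F: "finite F"
    have "(\<Sum>k\<in>F. if k \<in> J then 0 else s k) \<le> (\<Sum>k\<in>F \<union> J. if k \<in> J then 0 else s k)"
      using F finJ by (intro sum_mono2) (auto simp: s0)
    also have "\<dots> = (\<Sum>k\<in>(F \<union> J) - J. s k)"
      using F finJ by (intro sum.mono_neutral_cong_right) auto
    also have "\<dots> = (\<Sum>k\<in>F \<union> J. s k) - (\<Sum>k\<in>J. s k)"
      using F finJ by (subst sum_diff) auto
    also have "\<dots> \<le> X" using F finJ by (intro H) auto
    finally show "(\<Sum>k\<in>F. if k \<in> J then 0 else s k) \<le> X" .
  qed
qed

lemma nX_nonneg_from:
  assumes "\<And>x k. x \<in> X \<Longrightarrow> cmod (x k) \<le> nX x" "x \<in> X"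
  shows "0 \<le> nX x"
  using assms(1)[OF assms(2), of undefined] norm_ge_zero order_trans by blast

lemma zt_eq:
  assumes M: "M > 0"
  shows "exp (- (\<i> * complex_of_real (kdot k (tg M z l)))) = ch M (int l * (-1 * kz z k))"
proof -
  have "exp (- (\<i> * complex_of_real (kdot k (tg M z l)))) = cnj (exp (\<i> * complex_of_real (kdot k (tg M z l))))"
    by (simp add: exp_cnj)
  also have "\<dots> = cnj (ch M (int l * kz z k))" by (simp add: exp_kdot_tg[OF M])
  also have "\<dots> = ch M (int l * (-1 * kz z k))" by (simp add: ch_cnj)
  finally show ?thesis .
qed

lemma lower_BM:
  fixes v :: "int^'d::finite \<Rightarrow> real" and X :: "'d coeffs set" and nX :: "'d coeffs \<Rightarrow> real"
    and A :: "'d coeffs \<Rightarrow> 'd coeffs"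
  assumes vpos: "\<And>k. v k > 0" and sv: "(\<lambda>k. (v k)\<^sup>2) summable_on UNIV"
    and Xb: "\<And>x k. x \<in> X \<Longrightarrow> cmod (x k) \<le> nX x"
    and Xz: "\<And>t. t \<in> torus \<Longrightarrow> (\<lambda>k. exp (- (\<i> * complex_of_real (kdot k t)))) \<in> X
                 \<and> nX (\<lambda>k. exp (- (\<i> * complex_of_real (kdot k t)))) \<le> 1"
    and finJ: "finite J" and ordJ: "\<forall>k\<in>J. \<forall>k'. k' \<notin> J \<longrightarrow> (v k')\<^sup>2 \<le> (v k)\<^sup>2"
    and bl: "bounded_lin_op X nX (F_set v) (F_norm v) A" and rk: "rank_less X A (Suc (card J))"
  shows "sqrt (\<Sum>\<^sub>\<infinity>k. if k \<in> J then 0 else (v k)\<^sup>2) \<le> op_norm X nX (F_norm v) (\<lambda>x k. x k - A x k)"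
proof -
  define U where "U = {x \<in> X. nX x \<le> 1}"
  define zt :: "real^'d \<Rightarrow> 'd coeffs" where "zt = (\<lambda>t k. exp (- (\<i> * complex_of_real (kdot k t))))"
  define S where "S = (\<Sum>\<^sub>\<infinity>k. (v k)\<^sup>2)"
  define op where "op = op_norm X nX (F_norm v) (\<lambda>x k. x k - A x k)"
  have op_def': "op = (SUP x\<in>U. F_norm v (\<lambda>k. x k - A x k))" unfolding op_def op_norm_def U_def ..
  obtain m ys where m: "m < Suc (card J)" and rep: "\<forall>x\<in>X. \<exists>a. A x = (\<lambda>k. \<Sum>j<m. a j * ys j k)"
    using rk unfolding rank_less_def by blast
  obtain \<alpha> where \<alpha>: "\<forall>x\<in>X. A x = (\<lambda>k. \<Sum>j<m. \<alpha> x j * ys j k)" using bchoice[OF rep] by blast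
  have AX: "\<forall>x\<in>X. A x \<in> F_set v" using bl unfolding bounded_lin_op_def by blast
  obtain C where C: "\<forall>x\<in>X. F_norm v (A x) \<le> C * nX x" using bl unfolding bounded_lin_op_def by blast
  have nX0: "0 \<le> nX x" if "x \<in> X" for x using nX_nonneg_from[OF Xb that] .
  have sumx: "(\<lambda>k. (v k)\<^sup>2 * (cmod (x k))\<^sup>2) summable_on UNIV" if "x \<in> X" for x
    using weighted_bounded(1)[OF sv Xb[OF that]] .
  have sumAx: "(\<lambda>k. (v k)\<^sup>2 * (cmod (A x k))\<^sup>2) summable_on UNIV" if "x \<in> X" for x
    using AX that unfolding F_set_def by blast
  have bnd: "F_norm v (\<lambda>k. x k - A x k) \<le> 2 * (sqrt S + \<bar>C\<bar>)" if "x \<in> U" for x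
  proof -
    have xX: "x \<in> X" and x1: "nX x \<le> 1" using that unfolding U_def by auto
    have "(F_norm v x)\<^sup>2 \<le> 1\<^sup>2 * S"
      unfolding F_norm_sq S_def by (rule weighted_bounded(2)[OF sv]) (use Xb[OF xX] x1 in \<open>meson order_trans\<close>)
    then have "F_norm v x \<le> sqrt S" using F_norm_nonneg real_le_rsqrt by simp
    moreover have "F_norm v (A x) \<le> \<bar>C\<bar>"
    proof -
      have "F_norm v (A x) \<le> C * nX x" using C xX by blast
      also have "\<dots> \<le> \<bar>C\<bar> * nX x" using nX0[OF xX] by (simp add: mult_right_mono)
      also have "\<dots> \<le> \<bar>C\<bar>" using nX0[OF xX] x1 by (simp add: mult_left_le)
      finally show ?thesis .
    qed
    ultimately have s: "F_norm v x + F_norm v (A x) \<le> sqrt S + \<bar>C\<bar>" by (rule add_mono)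
    have "F_norm v (\<lambda>k. x k - A x k) \<le> 2 * (F_norm v x + F_norm v (A x))"
      by (rule F_norm_diff_le[OF sumx[OF xX] sumAx[OF xX]])
    also have "\<dots> \<le> 2 * (sqrt S + \<bar>C\<bar>)" using s by simp
    finally show ?thesis .
  qed
  have bdd: "bdd_above ((\<lambda>x. F_norm v (\<lambda>k. x k - A x k)) ` U)"
    using bnd by (auto simp: bdd_above_def)
  have le_op: "F_norm v (\<lambda>k. x k - A x k) \<le> op" if "x \<in> U" for x
    unfolding op_def' by (rule cSUP_upper[OF that bdd])
  have zU: "zt t \<in> U" if "t \<in> torus" for t using Xz[OF that] unfolding U_def zt_def by blast
  have t0: "(0::real^'d) \<in> torus" unfolding torus_def by simp
  have op0: "0 \<le> op" using le_op[OF zU[OF t0]] F_norm_nonneg order_trans by blast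
  have key: "(\<Sum>k\<in>Q. (v k)\<^sup>2) - (\<Sum>k\<in>J. (v k)\<^sup>2) \<le> op\<^sup>2" if Q: "finite Q" "J \<subseteq> Q" for Q
  proof -
    obtain M z where M: "M > 0" and inj: "\<forall>k\<in>Q. \<forall>k'\<in>Q. int M dvd (kz z k - kz z k') \<longrightarrow> k = k'"
      using exists_lattice[OF Q(1)] by blast
    define u where "u = (\<lambda>l k. complex_of_real (v k) * ch M (int l * (-1 * kz z k)))"
    define ys' where "ys' = (\<lambda>j k. complex_of_real (v k) * ys j k)"
    define a' where "a' = (\<lambda>l j. \<alpha> (zt (tg M z l)) j)"
    have orth: "(\<Sum>l<M. u l k * cnj (u l k')) = (if k = k' then complex_of_real (real M * (v k)\<^sup>2) else 0)"
      if "k \<in> Q" "k' \<in> Q" for k k'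
      unfolding u_def by (rule lattice_orth[OF M inj that]) simp
    have ord: "(v k')\<^sup>2 \<le> (v k)\<^sup>2" if "k \<in> J" "k' \<in> Q - J" for k k' using ordJ that by blast
    have "\<exists>l<M. nQ Q (\<lambda>k. u l k - (\<Sum>j<m. a' l j * ys' j k)) \<ge> (\<Sum>k\<in>Q. (v k)\<^sup>2) - (\<Sum>k\<in>J. (v k)\<^sup>2)"
      by (rule core[where s="\<lambda>k. (v k)\<^sup>2" and m=m and a=a' and ys=ys', OF Q(1) Q(2) _ M orth]) (use m ord in auto)
    then obtain l where l: "l < M"
      and ge: "nQ Q (\<lambda>k. u l k - (\<Sum>j<m. a' l j * ys' j k)) \<ge> (\<Sum>k\<in>Q. (v k)\<^sup>2) - (\<Sum>k\<in>J. (v k)\<^sup>2)"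
      by blast
    define x where "x = zt (tg M z l)"
    have xU: "x \<in> U" unfolding x_def by (rule zU[OF tg_torus[OF M]])
    then have xX: "x \<in> X" unfolding U_def by simp
    have eq: "u l k - (\<Sum>j<m. a' l j * ys' j k) = complex_of_real (v k) * (x k - A x k)" for k
    proof -
      have "x k = ch M (int l * (-1 * kz z k))" unfolding x_def zt_def by (rule zt_eq[OF M])
      moreover have "(\<Sum>j<m. a' l j * ys' j k) = complex_of_real (v k) * A x k"
        using \<alpha> xX unfolding a'_def ys'_def x_def by (simp add: sum_distrib_left mult_ac)
      ultimately show ?thesis unfolding u_def by (simp add: algebra_simps)
    qed
    have "nQ Q (\<lambda>k. u l k - (\<Sum>j<m. a' l j * ys' j k)) = (\<Sum>k\<in>Q. (v k)\<^sup>2 * (cmod (x k - A x k))\<^sup>2)"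
      unfolding nQ_def eq by (simp add: norm_mult power_mult_distrib)
    also have "\<dots> \<le> (\<Sum>\<^sub>\<infinity>k. (v k)\<^sup>2 * (cmod (x k - A x k))\<^sup>2)"
      by (rule finite_le_infsum[OF weighted_diff(1)[OF sumx[OF xX] sumAx[OF xX]] Q(1)]) simp
    also have "\<dots> = (F_norm v (\<lambda>k. x k - A x k))\<^sup>2" by (simp add: F_norm_sq)
    also have "\<dots> \<le> op\<^sup>2" by (rule power_mono[OF le_op[OF xU] F_norm_nonneg])
    finally show ?thesis using ge by linarith
  qed
  have "(\<Sum>\<^sub>\<infinity>k. if k \<in> J then 0 else (v k)\<^sup>2) \<le> op\<^sup>2"
    by (rule tail_bound[OF sv _ finJ key]) auto
  then have "sqrt (\<Sum>\<^sub>\<infinity>k. if k \<in> J then 0 else (v k)\<^sup>2) \<le> sqrt (op\<^sup>2)" by (rule real_sqrt_le_mono)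
  then show ?thesis using op0 unfolding op_def by simp
qed

lemma summable_fin_supp:
  fixes f :: "'a \<Rightarrow> 'b::{comm_monoid_add, topological_space}"
  assumes "finite F" "\<And>k. k \<notin> F \<Longrightarrow> f k = 0"
  shows "f summable_on UNIV"
proof -
  have "f summable_on F" using assms(1) by simp
  moreover have "f summable_on F \<longleftrightarrow> f summable_on UNIV"
    by (rule summable_on_cong_neutral) (use assms in auto)
  ultimately show ?thesis by simp
qed

lemma infsum_fin_supp:
  fixes f :: "'a \<Rightarrow> 'b::{comm_monoid_add, t2_space}"
  assumes "finite F" "\<And>k. k \<notin> F \<Longrightarrow> f k = 0"
  shows "infsum f UNIV = sum f F"
proof -
  have "infsum f UNIV = infsum f F"
    by (rule infsum_cong_neutral) (use assms in auto)
  then show ?thesis using assms(1) by simp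
qed

lemma poly_bounded_fin:
  assumes "finite F" "\<And>k. k \<notin> F \<Longrightarrow> c k = 0"
  shows "poly_bounded c"
  unfolding poly_bounded_def
proof (intro exI[of _ "\<Sum>k\<in>F. cmod (c k)"] exI[of _ 0] allI)
  fix k
  show "cmod (c k) \<le> (\<Sum>k\<in>F. cmod (c k)) * (1 + (\<Sum>i\<in>UNIV. real_of_int \<bar>k $ i\<bar>)) ^ 0"
  proof (cases "k \<in> F")
    case True
    then show ?thesis using assms(1) by (simp, intro member_le_sum) auto
  next
    case False
    then show ?thesis using assms by (simp add: sum_nonneg)
  qed
qed

lemma F_set_fin:
  assumes "finite F" "\<And>k. k \<notin> F \<Longrightarrow> c k = 0"
  shows "c \<in> F_set v"
  unfolding F_set_def using poly_bounded_fin[OF assms] summable_fin_supp[OF assms(1), of "\<lambda>k. (v k)\<^sup>2 * (cmod (c k))\<^sup>2"] assms(2)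
  by simp

lemma A_set_fin:
  assumes "finite F" "\<And>k. k \<notin> F \<Longrightarrow> c k = 0"
  shows "c \<in> A_set"
  unfolding A_set_def using summable_fin_supp[OF assms(1), of "\<lambda>k. cmod (c k)"] assms(2) by simp

definition PJ :: "(int^'d::finite) set \<Rightarrow> 'd coeffs \<Rightarrow> 'd coeffs" where
  "PJ J x = (\<lambda>k. if k \<in> J then x k else 0)"

lemma PJ_rank:
  assumes "finite J"
  shows "rank_less X (PJ J) (Suc (card J))"
proof -
  obtain e where e: "bij_betw e {0..<card J} J" using ex_bij_betw_nat_finite[OF assms] by blast
  define ys where "ys = (\<lambda>j k. if k = e j then (1::complex) else 0)"
  have "\<forall>x\<in>X. \<exists>a. PJ J x = (\<lambda>k. \<Sum>j<card J. a j * ys j k)"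
  proof
    fix x
    show "\<exists>a. PJ J x = (\<lambda>k. \<Sum>j<card J. a j * ys j k)"
    proof (intro exI[of _ "\<lambda>j. x (e j)"] ext)
      fix k
      have "(\<Sum>j<card J. x (e j) * ys j k) = (\<Sum>j\<in>{0..<card J}. (\<lambda>k'. x k' * (if k = k' then 1 else 0)) (e j))"
        unfolding ys_def by (intro sum.cong) auto
      also have "\<dots> = (\<Sum>k'\<in>J. x k' * (if k = k' then 1 else 0))"
        by (rule sum.reindex_bij_betw[OF e])
      also have "\<dots> = (\<Sum>k'\<in>J. if k = k' then x k' else 0)" by (intro sum.cong) auto
      also have "\<dots> = PJ J x k" unfolding PJ_def using assms by simp
      finally show "PJ J x k = (\<Sum>j<card J. x (e j) * ys j k)" ..
    qed
  qed
  then show ?thesis unfolding rank_less_def by blast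
qed

lemma PJ_add: "PJ J (\<lambda>k. x k + y k) = (\<lambda>k. PJ J x k + PJ J y k)"
  unfolding PJ_def by auto

lemma PJ_scale: "PJ J (\<lambda>k. a * x k) = (\<lambda>k. a * PJ J x k)"
  unfolding PJ_def by auto

lemma PJ_fin: "finite J \<Longrightarrow> k \<notin> J \<Longrightarrow> PJ J x k = 0"
  unfolding PJ_def by simp

lemma PJ_diff: "cmod (x k - PJ J x k) = (if k \<in> J then 0 else cmod (x k))"
  unfolding PJ_def by simp

lemma upper_BM:
  fixes v :: "int^'d::finite \<Rightarrow> real" and X :: "'d coeffs set" and nX :: "'d coeffs \<Rightarrow> real"
  assumes vpos: "\<And>k. v k > 0" and sv: "(\<lambda>k. (v k)\<^sup>2) summable_on UNIV"
    and Xb: "\<And>x k. x \<in> X \<Longrightarrow> cmod (x k) \<le> nX x"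
    and Xz: "\<And>t. t \<in> torus \<Longrightarrow> (\<lambda>k. exp (- (\<i> * complex_of_real (kdot k t)))) \<in> X
                 \<and> nX (\<lambda>k. exp (- (\<i> * complex_of_real (kdot k t)))) \<le> 1"
    and finJ: "finite J"
  shows "bounded_lin_op X nX (F_set v) (F_norm v) (PJ J)"
    and "op_norm X nX (F_norm v) (\<lambda>x k. x k - PJ J x k) \<le> sqrt (\<Sum>\<^sub>\<infinity>k. if k \<in> J then 0 else (v k)\<^sup>2)"
proof -
  define S where "S = (\<Sum>\<^sub>\<infinity>k. (v k)\<^sup>2)"
  have nX0: "0 \<le> nX x" if "x \<in> X" for x using nX_nonneg_from[OF Xb that] .
  have bound: "F_norm v (PJ J x) \<le> sqrt S * nX x" if "x \<in> X" for x
  proof -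
    have b: "cmod (PJ J x k) \<le> nX x" for k using Xb[OF that, of k] nX0[OF that] unfolding PJ_def by auto
    have "(F_norm v (PJ J x))\<^sup>2 \<le> (nX x)\<^sup>2 * S"
      unfolding F_norm_sq S_def by (rule weighted_bounded(2)[OF sv b])
    then have "F_norm v (PJ J x) \<le> sqrt ((nX x)\<^sup>2 * S)" using F_norm_nonneg real_le_rsqrt by blast
    also have "\<dots> = sqrt S * nX x" using nX0[OF that] by (simp add: real_sqrt_mult)
    finally show ?thesis .
  qed
  have PJF: "PJ J x \<in> F_set v" for x by (rule F_set_fin[OF finJ]) (simp add: PJ_def)
  show "bounded_lin_op X nX (F_set v) (F_norm v) (PJ J)"
    unfolding bounded_lin_op_def
    using PJF PJ_add PJ_scale bound by blast
  define U where "U = {x \<in> X. nX x \<le> 1}"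
  have t0: "(0::real^'d) \<in> torus" unfolding torus_def by simp
  have Une: "U \<noteq> {}" using Xz[OF t0] unfolding U_def by blast
  have st: "(\<lambda>k. if k \<in> J then 0 else (v k)\<^sup>2) summable_on UNIV"
    by (rule summable_comp_real[OF sv]) auto
  show "op_norm X nX (F_norm v) (\<lambda>x k. x k - PJ J x k) \<le> sqrt (\<Sum>\<^sub>\<infinity>k. if k \<in> J then 0 else (v k)\<^sup>2)"
    unfolding op_norm_def
  proof (rule cSUP_least)
    show "{x \<in> X. nX x \<le> 1} \<noteq> {}" using Une unfolding U_def .
    fix x assume "x \<in> {x \<in> X. nX x \<le> 1}"
    then have xX: "x \<in> X" and x1: "nX x \<le> 1" by auto
    have b1: "cmod (x k - PJ J x k) \<le> 1" for k using Xb[OF xX, of k] x1 unfolding PJ_diff by auto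
    have "(F_norm v (\<lambda>k. x k - PJ J x k))\<^sup>2 \<le> (\<Sum>\<^sub>\<infinity>k. if k \<in> J then 0 else (v k)\<^sup>2)"
      unfolding F_norm_sq
    proof (rule infsum_mono[OF weighted_bounded(1)[OF sv b1] st])
      fix k
      show "(v k)\<^sup>2 * (cmod (x k - PJ J x k))\<^sup>2 \<le> (if k \<in> J then 0 else (v k)\<^sup>2)"
      proof (cases "k \<in> J")
        case False
        have "(cmod (x k))\<^sup>2 \<le> 1" using Xb[OF xX, of k] x1 by (simp add: power_le_one)
        then show ?thesis using False unfolding PJ_diff by (simp add: mult_left_le)
      qed (simp add: PJ_diff)
    qed
    then show "F_norm v (\<lambda>k. x k - PJ J x k) \<le> sqrt (\<Sum>\<^sub>\<infinity>k. if k \<in> J then 0 else (v k)\<^sup>2)"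
      using F_norm_nonneg real_le_rsqrt by blast
  qed
qed

lemma upper_Op3:
  fixes w :: "int^'d::finite \<Rightarrow> real"
  assumes wpos: "\<And>k. w k > 0" and sw: "(\<lambda>k. 1 / (w k)\<^sup>2) summable_on UNIV"
    and finJ: "finite J"
  shows "bounded_lin_op (F_set w) (F_norm w) A_set A_norm (PJ J)"
    and "op_norm (F_set w) (F_norm w) A_norm (\<lambda>x k. x k - PJ J x k) \<le> sqrt (\<Sum>\<^sub>\<infinity>k. if k \<in> J then 0 else (1 / w k)\<^sup>2)"
proof -
  define S where "S = (\<Sum>\<^sub>\<infinity>k. 1 / (w k)\<^sup>2)"
  have sumx: "(\<lambda>k. (w k)\<^sup>2 * (cmod (x k))\<^sup>2) summable_on UNIV" if "x \<in> F_set w" for x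
    using that unfolding F_set_def by blast
  have bound: "A_norm (PJ J x) \<le> sqrt S * F_norm w x" if xF: "x \<in> F_set w" for x
  proof -
    have "PJ J x \<in> F_set w" by (rule F_set_fin[OF finJ]) (simp add: PJ_def)
    then have sP: "(\<lambda>k. (w k)\<^sup>2 * (cmod (PJ J x k))\<^sup>2) summable_on UNIV"
      unfolding F_set_def by blast
    have a1: "A_norm (PJ J x) \<le> sqrt S * F_norm w (PJ J x)" unfolding S_def by (rule Fw_in_l1(2)[OF wpos sw sP])
    have le: "F_norm w (PJ J x) \<le> F_norm w x"
      unfolding F_norm_def
      by (intro real_sqrt_le_mono infsum_mono[OF sP sumx[OF xF]]) (auto simp: PJ_def)
    have S0: "0 \<le> S" unfolding S_def by (rule Infinite_Sum.infsum_nonneg) simp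
    have "sqrt S * F_norm w (PJ J x) \<le> sqrt S * F_norm w x" using le S0 by (intro mult_left_mono) auto
    then show ?thesis using a1 by linarith
  qed
  have PJA: "PJ J x \<in> A_set" for x by (rule A_set_fin[OF finJ]) (simp add: PJ_def)
  show "bounded_lin_op (F_set w) (F_norm w) A_set A_norm (PJ J)"
    unfolding bounded_lin_op_def
    using PJA PJ_add PJ_scale bound by blast
  have zero: "(\<lambda>k. 0) \<in> {x \<in> F_set w. F_norm w x \<le> 1}"
    using F_set_fin[of "{}" "\<lambda>k. 0" w] by (simp add: F_norm_def)
  show "op_norm (F_set w) (F_norm w) A_norm (\<lambda>x k. x k - PJ J x k) \<le> sqrt (\<Sum>\<^sub>\<infinity>k. if k \<in> J then 0 else (1 / w k)\<^sup>2)"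
    unfolding op_norm_def
  proof (rule cSUP_least)
    show "{x \<in> F_set w. F_norm w x \<le> 1} \<noteq> {}" using zero by blast
    fix x assume "x \<in> {x \<in> F_set w. F_norm w x \<le> 1}"
    then have xF: "x \<in> F_set w" and x1: "F_norm w x \<le> 1" by auto
    define g where "g = (\<lambda>k. if k \<in> J then 0 else 1 / w k)"
    define h where "h = (\<lambda>k. w k * cmod (x k))"
    have gh: "\<bar>g k * h k\<bar> = cmod (x k - PJ J x k)" for k
      using wpos[of k] unfolding g_def h_def PJ_diff by simp
    have g2: "(\<lambda>k. (g k)\<^sup>2) = (\<lambda>k. if k \<in> J then 0 else (1 / w k)\<^sup>2)" unfolding g_def by auto
    have sg: "(\<lambda>k. (g k)\<^sup>2) summable_on UNIV" unfolding g2
      by (rule summable_comp_real[OF sw]) (auto simp: power_divide)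
    have h2: "(\<lambda>k. (h k)\<^sup>2) = (\<lambda>k. (w k)\<^sup>2 * (cmod (x k))\<^sup>2)" unfolding h_def by (simp add: power_mult_distrib)
    have sh: "(\<lambda>k. (h k)\<^sup>2) summable_on UNIV" unfolding h2 by (rule sumx[OF xF])
    have "A_norm (\<lambda>k. x k - PJ J x k) = (\<Sum>\<^sub>\<infinity>k. \<bar>g k * h k\<bar>)" unfolding A_norm_def gh ..
    also have "\<dots> \<le> sqrt (\<Sum>\<^sub>\<infinity>k. (g k)\<^sup>2) * sqrt (\<Sum>\<^sub>\<infinity>k. (h k)\<^sup>2)" by (rule cs_infsum(2)[OF sg sh])
    also have "\<dots> = sqrt (\<Sum>\<^sub>\<infinity>k. if k \<in> J then 0 else (1 / w k)\<^sup>2) * F_norm w x"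
      unfolding g2 h2 F_norm_def ..
    also have "\<dots> \<le> sqrt (\<Sum>\<^sub>\<infinity>k. if k \<in> J then 0 else (1 / w k)\<^sup>2)"
    proof -
      have T0: "0 \<le> sqrt (\<Sum>\<^sub>\<infinity>k. if k \<in> J then 0 else (1 / w k)\<^sup>2)"
        by (intro real_sqrt_ge_zero Infinite_Sum.infsum_nonneg) simp
      show ?thesis using mult_left_le[OF x1 T0] .
    qed
    finally show "A_norm (\<lambda>k. x k - PJ J x k) \<le> sqrt (\<Sum>\<^sub>\<infinity>k. if k \<in> J then 0 else (1 / w k)\<^sup>2)" .
  qed
qed

lemma norm_ch: "cmod (ch M a) = 1" unfolding ch_def by simp

definition ev :: "int^'d::finite \<Rightarrow> 'd coeffs" where
  "ev k = (\<lambda>k'. if k' = k then 1 else 0)"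

lemma lin_comb:
  fixes X :: "'d::finite coeffs set" and A :: "'d coeffs \<Rightarrow> 'd coeffs" and Q :: "(int^'d) set"
  assumes bl: "bounded_lin_op X nX Y nY A"
    and fsX: "\<And>x. finite {k. x k \<noteq> 0} \<Longrightarrow> x \<in> X"
    and finQ: "finite Q"
  shows "A (\<lambda>k'. \<Sum>k\<in>Q. c k * ev k k') = (\<lambda>k'. \<Sum>k\<in>Q. c k * A (ev k) k')"
  using finQ
proof (induction Q rule: finite_induct)
  case empty
  have z: "(\<lambda>k::int^'d. 0::complex) \<in> X" by (rule fsX) simp
  have sc: "\<forall>x\<in>X. \<forall>a. A (\<lambda>k. a * x k) = (\<lambda>k. a * A x k)" using bl unfolding bounded_lin_op_def by blast
  have "A (\<lambda>k. 0 * (\<lambda>k. 0::complex) k) = (\<lambda>k. 0 * A (\<lambda>k. 0) k)" using sc[rule_format, OF z, of 0] .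
  then show ?case by simp
next
  case (insert q Q)
  define x where "x = (\<lambda>k'. c q * ev q k')"
  define y where "y = (\<lambda>k'. \<Sum>k\<in>Q. c k * ev k k')"
  have evX: "ev q \<in> X" by (rule fsX) (simp add: ev_def)
  have xX: "x \<in> X" by (rule fsX, rule finite_subset[of _ "{q}"]) (auto simp: x_def ev_def)
  have yX: "y \<in> X"
  proof (rule fsX, rule finite_subset[OF _ insert(1)])
    show "{k. y k \<noteq> 0} \<subseteq> Q"
    proof
      fix k' assume "k' \<in> {k. y k \<noteq> 0}"
      then have "y k' \<noteq> 0" by simp
      then obtain k where "k \<in> Q" "c k * ev k k' \<noteq> 0" unfolding y_def by (meson sum.neutral)
      then show "k' \<in> Q" by (auto simp: ev_def split: if_splits)
    qed
  qed
  have add: "A (\<lambda>k. x k + y k) = (\<lambda>k. A x k + A y k)" using bl xX yX unfolding bounded_lin_op_def by blast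
  have sc: "\<forall>x\<in>X. \<forall>a. A (\<lambda>k. a * x k) = (\<lambda>k. a * A x k)" using bl unfolding bounded_lin_op_def by blast
  have scl: "A x = (\<lambda>k'. c q * A (ev q) k')" unfolding x_def using sc[rule_format, OF evX, of "c q"] .
  have "(\<lambda>k'. \<Sum>k\<in>insert q Q. c k * ev k k') = (\<lambda>k. x k + y k)"
    unfolding x_def y_def using insert by simp
  then have "A (\<lambda>k'. \<Sum>k\<in>insert q Q. c k * ev k k') = (\<lambda>k. A x k + A y k)" using add by simp
  also have "\<dots> = (\<lambda>k'. \<Sum>k\<in>insert q Q. c k * A (ev k) k')"
    using insert scl unfolding y_def by simp
  finally show ?case .
qed

lemma lower_Op3:
  fixes w :: "int^'d::finite \<Rightarrow> real" and A :: "'d coeffs \<Rightarrow> 'd coeffs"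
  assumes wpos: "\<And>k. w k > 0" and sw: "(\<lambda>k. 1 / (w k)\<^sup>2) summable_on UNIV"
    and finJ: "finite J" and ordJ: "\<forall>k\<in>J. \<forall>k'. k' \<notin> J \<longrightarrow> (1 / w k')\<^sup>2 \<le> (1 / w k)\<^sup>2"
    and bl: "bounded_lin_op (F_set w) (F_norm w) A_set A_norm A" and rk: "rank_less (F_set w) A (Suc (card J))"
  shows "sqrt (\<Sum>\<^sub>\<infinity>k. if k \<in> J then 0 else (1 / w k)\<^sup>2) \<le> op_norm (F_set w) (F_norm w) A_norm (\<lambda>x k. x k - A x k)"
proof -
  define X where "X = F_set w"
  define \<sigma> where "\<sigma> = (\<lambda>k. 1 / w k)"
  define U where "U = {x \<in> X. F_norm w x \<le> 1}"
  define S where "S = (\<Sum>\<^sub>\<infinity>k. 1 / (w k)\<^sup>2)"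
  define op where "op = op_norm (F_set w) (F_norm w) A_norm (\<lambda>x k. x k - A x k)"
  have op_def': "op = (SUP x\<in>U. A_norm (\<lambda>k. x k - A x k))" unfolding op_def op_norm_def U_def X_def ..
  have sv: "(\<lambda>k. (\<sigma> k)\<^sup>2) summable_on UNIV" using sw unfolding \<sigma>_def by (simp add: power_divide)
  obtain m ys where m: "m < Suc (card J)" and rep: "\<forall>x\<in>X. \<exists>a. A x = (\<lambda>k. \<Sum>j<m. a j * ys j k)"
    using rk unfolding rank_less_def X_def by blast
  obtain \<alpha> where \<alpha>: "\<forall>x\<in>X. A x = (\<lambda>k. \<Sum>j<m. \<alpha> x j * ys j k)" using bchoice[OF rep] by blast
  have AX: "\<forall>x\<in>X. A x \<in> A_set" using bl unfolding bounded_lin_op_def X_def by blast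
  obtain C where C: "\<forall>x\<in>X. A_norm (A x) \<le> C * F_norm w x" using bl unfolding bounded_lin_op_def X_def by blast
  have fsX: "x \<in> X" if "finite {k. x k \<noteq> 0}" for x unfolding X_def by (rule F_set_fin[OF that]) simp
  have sumx: "(\<lambda>k. (w k)\<^sup>2 * (cmod (x k))\<^sup>2) summable_on UNIV" if "x \<in> X" for x
    using that unfolding X_def F_set_def by blast
  have l1x: "(\<lambda>k. cmod (x k)) summable_on UNIV" if "x \<in> X" for x by (rule Fw_in_l1(1)[OF wpos sw sumx[OF that]])
  have l1Ax: "(\<lambda>k. cmod (A x k)) summable_on UNIV" if "x \<in> X" for x using AX that unfolding A_set_def by blast
  have S0: "0 \<le> S" unfolding S_def by (rule Infinite_Sum.infsum_nonneg) simp
  have bnd: "A_norm (\<lambda>k. x k - A x k) \<le> sqrt S + \<bar>C\<bar>" if "x \<in> U" for x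
  proof -
    have xX: "x \<in> X" and x1: "F_norm w x \<le> 1" using that unfolding U_def by auto
    have "A_norm x \<le> sqrt S * F_norm w x" unfolding S_def by (rule Fw_in_l1(2)[OF wpos sw sumx[OF xX]])
    also have "\<dots> \<le> sqrt S" using mult_left_le[OF x1] S0 by simp
    finally have a: "A_norm x \<le> sqrt S" .
    have "A_norm (A x) \<le> C * F_norm w x" using C xX by blast
    also have "\<dots> \<le> \<bar>C\<bar> * F_norm w x" using F_norm_nonneg[of w x] by (simp add: mult_right_mono)
    also have "\<dots> \<le> \<bar>C\<bar>" using F_norm_nonneg[of w x] x1 by (simp add: mult_left_le)
    finally have b: "A_norm (A x) \<le> \<bar>C\<bar>" .
    show ?thesis using A_diff(2)[OF l1x[OF xX] l1Ax[OF xX]] a b by linarith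
  qed
  have bdd: "bdd_above ((\<lambda>x. A_norm (\<lambda>k. x k - A x k)) ` U)"
    using bnd by (auto simp: bdd_above_def)
  have le_op: "A_norm (\<lambda>k. x k - A x k) \<le> op" if "x \<in> U" for x
    unfolding op_def' by (rule cSUP_upper[OF that bdd])
  have zU: "(\<lambda>k. 0) \<in> U" unfolding U_def using fsX[of "\<lambda>k. 0"] by (simp add: F_norm_def)
  have op0: "0 \<le> op" using le_op[OF zU] A_norm_nonneg order_trans by blast
  have evX: "ev k \<in> X" for k by (rule fsX) (simp add: ev_def)
  have key: "(\<Sum>k\<in>Q. (\<sigma> k)\<^sup>2) - (\<Sum>k\<in>J. (\<sigma> k)\<^sup>2) \<le> op\<^sup>2" if Q: "finite Q" "J \<subseteq> Q" for Q
  proof -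
    obtain M z where M: "M > 0" and inj: "\<forall>k\<in>Q. \<forall>k'\<in>Q. int M dvd (kz z k - kz z k') \<longrightarrow> k = k'"
      using exists_lattice[OF Q(1)] by blast
    define \<beta> where "\<beta> = (\<lambda>j l. \<Sum>k'\<in>Q. ys j k' * ch M (int l * kz z k'))"
    define u where "u = (\<lambda>l k. complex_of_real (\<sigma> k) * ch M (int l * (1 * kz z k)))"
    define ys' where "ys' = (\<lambda>j k. complex_of_real (\<sigma> k) * \<alpha> (ev k) j)"
    define a' where "a' = (\<lambda>l j. \<beta> j l)"
    have orth: "(\<Sum>l<M. u l k * cnj (u l k')) = (if k = k' then complex_of_real (real M * (\<sigma> k)\<^sup>2) else 0)"
      if "k \<in> Q" "k' \<in> Q" for k k'
      unfolding u_def by (rule lattice_orth[OF M inj that]) simp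
    have ord: "(\<sigma> k')\<^sup>2 \<le> (\<sigma> k)\<^sup>2" if "k \<in> J" "k' \<in> Q - J" for k k' using ordJ that unfolding \<sigma>_def by blast
    have "\<exists>l<M. nQ Q (\<lambda>k. u l k - (\<Sum>j<m. a' l j * ys' j k)) \<ge> (\<Sum>k\<in>Q. (\<sigma> k)\<^sup>2) - (\<Sum>k\<in>J. (\<sigma> k)\<^sup>2)"
      by (rule core[where s="\<lambda>k. (\<sigma> k)\<^sup>2" and m=m and a=a' and ys=ys', OF Q(1) Q(2) _ M orth]) (use m ord in auto)
    then obtain l where l: "l < M"
      and ge: "nQ Q (\<lambda>k. u l k - (\<Sum>j<m. a' l j * ys' j k)) \<ge> (\<Sum>k\<in>Q. (\<sigma> k)\<^sup>2) - (\<Sum>k\<in>J. (\<sigma> k)\<^sup>2)"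
      by blast
    define chv where "chv = (\<lambda>k'. ch M (int l * kz z k'))"
    define g where "g = (\<lambda>k. chv k - (\<Sum>k'\<in>Q. A (ev k) k' * chv k'))"
    have eqg: "u l k - (\<Sum>j<m. a' l j * ys' j k) = complex_of_real (\<sigma> k) * g k" for k
    proof -
      have "(\<Sum>j<m. a' l j * ys' j k) = complex_of_real (\<sigma> k) * (\<Sum>j<m. \<alpha> (ev k) j * (\<Sum>k'\<in>Q. ys j k' * chv k'))"
        unfolding a'_def ys'_def \<beta>_def chv_def by (simp add: sum_distrib_left mult_ac)
      also have "(\<Sum>j<m. \<alpha> (ev k) j * (\<Sum>k'\<in>Q. ys j k' * chv k')) = (\<Sum>k'\<in>Q. (\<Sum>j<m. \<alpha> (ev k) j * ys j k') * chv k')"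
        by (simp add: sum_distrib_left sum_distrib_right sum.swap[of _ "{..<m}"] mult_ac)
      also have "\<dots> = (\<Sum>k'\<in>Q. A (ev k) k' * chv k')"
        using \<alpha> evX[of k] by simp
      finally show ?thesis unfolding u_def g_def chv_def by (simp add: algebra_simps)
    qed
    define S2 where "S2 = (\<Sum>k\<in>Q. (\<sigma> k)\<^sup>2 * (cmod (g k))\<^sup>2)"
    have nQS2: "nQ Q (\<lambda>k. u l k - (\<Sum>j<m. a' l j * ys' j k)) = S2"
      unfolding nQ_def S2_def eqg by (simp add: norm_mult power_mult_distrib)
    have S20: "0 \<le> S2" unfolding S2_def by (simp add: sum_nonneg)
    have "S2 \<le> op\<^sup>2"
    proof (cases "S2 = 0")
      case True then show ?thesis by simp
    next
      case False
      define Sq where "Sq = sqrt S2"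
      have Sqpos: "Sq > 0" using False S20 unfolding Sq_def by simp
      have SqSq: "Sq * Sq = S2" unfolding Sq_def using S20 by simp
      define c where "c = (\<lambda>k. complex_of_real ((\<sigma> k)\<^sup>2) * cnj (g k) / complex_of_real Sq)"
      define x where "x = (\<lambda>k'. \<Sum>k\<in>Q. c k * ev k k')"
      have xval: "x k' = (if k' \<in> Q then c k' else 0)" for k'
        unfolding x_def ev_def using Q(1) by (simp add: if_distrib[of "\<lambda>t. _ * t"] sum.delta cong: if_cong)
      have xX: "x \<in> X" by (rule fsX, rule finite_subset[OF _ Q(1)]) (auto simp: xval split: if_splits)
      have cnorm: "(w k)\<^sup>2 * (cmod (c k))\<^sup>2 = (\<sigma> k)\<^sup>2 * (cmod (g k))\<^sup>2 / S2" for k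
      proof -
        have wk: "w k \<noteq> 0" using wpos[of k] by simp
        have "(cmod (c k))\<^sup>2 = ((\<sigma> k)\<^sup>2 * cmod (g k) / Sq)\<^sup>2"
          unfolding c_def using Sqpos by (simp add: norm_mult norm_divide norm_power)
        also have "\<dots> = (\<sigma> k)\<^sup>2 * (\<sigma> k)\<^sup>2 * (cmod (g k))\<^sup>2 / S2"
          using SqSq by (simp add: power2_eq_square field_simps)
        finally show ?thesis unfolding \<sigma>_def using wk by (simp add: field_simps power2_eq_square)
      qed
      have Fx: "F_norm w x = 1"
      proof -
        have "(\<Sum>\<^sub>\<infinity>k. (w k)\<^sup>2 * (cmod (x k))\<^sup>2) = (\<Sum>k\<in>Q. (w k)\<^sup>2 * (cmod (x k))\<^sup>2)"
          by (rule infsum_fin_supp[OF Q(1)]) (simp add: xval)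
        also have "\<dots> = (\<Sum>k\<in>Q. (\<sigma> k)\<^sup>2 * (cmod (g k))\<^sup>2 / S2)"
          by (intro sum.cong refl) (simp add: xval cnorm)
        also have "\<dots> = 1" unfolding S2_def[symmetric] sum_divide_distrib[symmetric] using False by simp
        finally show ?thesis unfolding F_norm_def by simp
      qed
      have xU: "x \<in> U" unfolding U_def using xX Fx by simp
      have Ax: "A x = (\<lambda>k'. \<Sum>k\<in>Q. c k * A (ev k) k')"
        unfolding x_def by (rule lin_comb[OF bl[folded X_def] fsX Q(1)])
      have "(\<Sum>k'\<in>Q. (x k' - A x k') * chv k') = (\<Sum>k\<in>Q. c k * g k)"
      proof -
        have s1: "(\<Sum>k'\<in>Q. (x k' - A x k') * chv k')
            = (\<Sum>k'\<in>Q. c k' * chv k' - (\<Sum>k\<in>Q. c k * A (ev k) k') * chv k')"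
          by (intro sum.cong refl) (simp add: Ax xval left_diff_distrib)
        have s2: "(\<Sum>k'\<in>Q. (\<Sum>k\<in>Q. c k * A (ev k) k') * chv k')
            = (\<Sum>k'\<in>Q. \<Sum>k\<in>Q. c k * A (ev k) k' * chv k')" by (simp add: sum_distrib_right)
        also have "\<dots> = (\<Sum>k\<in>Q. \<Sum>k'\<in>Q. c k * A (ev k) k' * chv k')" by (rule sum.swap)
        also have "\<dots> = (\<Sum>k\<in>Q. c k * (\<Sum>k'\<in>Q. A (ev k) k' * chv k'))"
          by (simp add: sum_distrib_left mult.assoc)
        finally have s3: "(\<Sum>k'\<in>Q. (\<Sum>k\<in>Q. c k * A (ev k) k') * chv k')
            = (\<Sum>k\<in>Q. c k * (\<Sum>k'\<in>Q. A (ev k) k' * chv k'))" .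
        have s4: "(\<Sum>k\<in>Q. c k * g k) = (\<Sum>k\<in>Q. c k * chv k) - (\<Sum>k\<in>Q. c k * (\<Sum>k'\<in>Q. A (ev k) k' * chv k'))"
          unfolding g_def by (simp add: right_diff_distrib sum_subtractf)
        show ?thesis unfolding s1 sum_subtractf s3 s4 ..
      qed
      also have "\<dots> = complex_of_real Sq"
      proof -
        have "c k * g k = complex_of_real ((\<sigma> k)\<^sup>2 * (cmod (g k))\<^sup>2 / Sq)" for k
        proof -
          have "cnj (g k) * g k = complex_of_real ((cmod (g k))\<^sup>2)" by (metis complex_norm_square mult.commute)
          then show ?thesis unfolding c_def by (simp add: field_simps)
        qed
        then have "(\<Sum>k\<in>Q. c k * g k) = complex_of_real (S2 / Sq)"
          unfolding S2_def by (simp add: sum_divide_distrib)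
        also have "S2 / Sq = Sq" using SqSq Sqpos by (simp add: field_simps)
        finally show ?thesis .
      qed
      finally have pair: "(\<Sum>k'\<in>Q. (x k' - A x k') * chv k') = complex_of_real Sq" .
      have "Sq = cmod (\<Sum>k'\<in>Q. (x k' - A x k') * chv k')" using pair Sqpos by simp
      also have "\<dots> \<le> (\<Sum>k'\<in>Q. cmod ((x k' - A x k') * chv k'))" by (rule norm_sum)
      also have "\<dots> = (\<Sum>k'\<in>Q. cmod (x k' - A x k'))" unfolding chv_def by (simp add: norm_mult norm_ch)
      also have "\<dots> \<le> A_norm (\<lambda>k. x k - A x k)"
        unfolding A_norm_def by (rule finite_le_infsum[OF A_diff(1)[OF l1x[OF xX] l1Ax[OF xX]] Q(1)]) simp
      also have "\<dots> \<le> op" by (rule le_op[OF xU])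
      finally have "Sq \<le> op" .
      then have "Sq * Sq \<le> op * op" using Sqpos by (simp add: mult_mono)
      then show ?thesis using SqSq by (simp add: power2_eq_square)
    qed
    then show ?thesis using ge nQS2 by linarith
  qed
  have "(\<Sum>\<^sub>\<infinity>k. if k \<in> J then 0 else (\<sigma> k)\<^sup>2) \<le> op\<^sup>2"
    by (rule tail_bound[OF sv _ finJ key]) auto
  then have "sqrt (\<Sum>\<^sub>\<infinity>k. if k \<in> J then 0 else (\<sigma> k)\<^sup>2) \<le> sqrt (op\<^sup>2)" by (rule real_sqrt_le_mono)
  then show ?thesis using op0 unfolding op_def \<sigma>_def by simp
qed

lemma norm_exp_neg: "cmod (exp (- (\<i> * complex_of_real r))) = 1"
  by simp

lemma B_bound: assumes "x \<in> B_set" shows "cmod (x k) \<le> B_norm x"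
proof -
  have "bdd_above (range (\<lambda>k. cmod (x k)))"
    using assms unfolding B_set_def by (simp add: bounded_imp_bdd_above)
  then show ?thesis unfolding B_norm_def by (rule cSUP_upper[OF UNIV_I])
qed

lemma B_z:
  "(\<lambda>k. exp (- (\<i> * complex_of_real (kdot k t)))) \<in> B_set
   \<and> B_norm (\<lambda>k. exp (- (\<i> * complex_of_real (kdot k t)))) \<le> 1"
proof -
  have r: "range (\<lambda>k. cmod (exp (- (\<i> * complex_of_real (kdot k t))))) = {1}"
    by (auto simp: norm_exp_neg)
  show ?thesis unfolding B_set_def B_norm_def r by simp
qed

lemma M_bound: assumes "x \<in> M_set" shows "cmod (x k) \<le> M_norm x"
proof -
  define R where "R = {(\<nu>, h). cmeas_rep \<nu> h \<and> x = meas_coeff \<nu> h}"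
  have ne: "R \<noteq> {}" using assms unfolding M_set_def R_def by blast
  have "cmod (x k) \<le> (INF p\<in>R. (case p of (\<nu>, h) \<Rightarrow> integral\<^sup>L \<nu> (\<lambda>x. cmod (h x))))"
  proof (rule cINF_greatest[OF ne])
    fix p assume "p \<in> R"
    then obtain \<nu> h where p: "p = (\<nu>, h)" and x: "x = meas_coeff \<nu> h" unfolding R_def by blast
    have "cmod (x k) = cmod (integral\<^sup>L \<nu> (\<lambda>y. exp (- \<i> * complex_of_real (kdot k y)) * h y))"
      unfolding x meas_coeff_def ..
    also have "\<dots> \<le> integral\<^sup>L \<nu> (\<lambda>y. cmod (exp (- \<i> * complex_of_real (kdot k y)) * h y))"
      by (rule integral_norm_bound)
    also have "\<dots> = integral\<^sup>L \<nu> (\<lambda>y. cmod (h y))"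
    proof -
      have "cmod (exp (- \<i> * complex_of_real (kdot k y)) * h y) = cmod (h y)" for y
        using norm_exp_neg[of "kdot k y"] by (simp add: norm_mult)
      then show ?thesis by simp
    qed
    finally show "cmod (x k) \<le> (case p of (\<nu>, h) \<Rightarrow> integral\<^sup>L \<nu> (\<lambda>x. cmod (h x)))" using p by simp
  qed
  then show ?thesis unfolding M_norm_def R_def .
qed

lemma torus_sets: "torus \<in> sets (borel :: (real^'d::finite) measure)"
  unfolding torus_def by measurable

lemma M_z:
  fixes t :: "real^'d::finite"
  assumes t: "t \<in> torus"
  shows "(\<lambda>k. exp (- (\<i> * complex_of_real (kdot k t)))) \<in> M_set
   \<and> M_norm (\<lambda>k. exp (- (\<i> * complex_of_real (kdot k t)))) \<le> 1"
proof -
  define \<nu> where "\<nu> = return (borel :: (real^'d) measure) t"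
  define h where "h = (\<lambda>y::real^'d. (1::complex))"
  have ps: "prob_space \<nu>" unfolding \<nu>_def by (rule prob_space_return) simp
  have rep: "cmeas_rep \<nu> h"
    unfolding cmeas_rep_def
  proof (intro conjI)
    show "sets \<nu> = sets borel" unfolding \<nu>_def by simp
    show "finite_measure \<nu>" using ps by (simp add: prob_space_def)
    have "UNIV - torus \<in> sets (borel :: (real^'d) measure)" using torus_sets by auto
    then show "emeasure \<nu> (UNIV - torus) = 0" unfolding \<nu>_def using t by simp
    show "integrable \<nu> h" unfolding h_def using ps by (simp add: prob_space.finite_measure finite_measure.integrable_const)
  qed
  have coeff: "meas_coeff \<nu> h = (\<lambda>k. exp (- (\<i> * complex_of_real (kdot k t))))"
  proof
    fix k
    have "meas_coeff \<nu> h k = (\<lambda>y. exp (- \<i> * complex_of_real (kdot k y)) * 1) t"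
      unfolding meas_coeff_def \<nu>_def h_def
      by (rule integral_return) (simp, unfold kdot_def, measurable)
    then show "meas_coeff \<nu> h k = exp (- (\<i> * complex_of_real (kdot k t)))" by simp
  qed
  have inM: "(\<lambda>k. exp (- (\<i> * complex_of_real (kdot k t)))) \<in> M_set"
    unfolding M_set_def mem_Collect_eq using rep coeff[symmetric] by blast
  define R where "R = {(\<nu>, h). cmeas_rep \<nu> h \<and> (\<lambda>k. exp (- (\<i> * complex_of_real (kdot k t)))) = meas_coeff \<nu> h}"
  have pR: "(\<nu>, h) \<in> R" unfolding R_def using rep coeff by simp
  have bdd: "bdd_below ((\<lambda>p. case p of (\<nu>, h) \<Rightarrow> integral\<^sup>L \<nu> (\<lambda>x. cmod (h x))) ` R)"
    by (rule bdd_belowI[of _ 0]) auto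
  have "M_norm (\<lambda>k. exp (- (\<i> * complex_of_real (kdot k t)))) \<le> integral\<^sup>L \<nu> (\<lambda>x. cmod (h x))"
    unfolding M_norm_def R_def[symmetric] using cINF_lower[OF bdd pR] by simp
  also have "\<dots> = 1"
    unfolding \<nu>_def h_def by (subst integral_return) auto
  finally show ?thesis using inM by simp
qed

lemma approx_eq:
  assumes lb: "\<And>A. bounded_lin_op X nX Y nY A \<Longrightarrow> rank_less X A n \<Longrightarrow> c \<le> op_norm X nX nY (\<lambda>x k. x k - A x k)"
    and A0: "bounded_lin_op X nX Y nY A0" "rank_less X A0 n" "op_norm X nX nY (\<lambda>x k. x k - A0 x k) \<le> c"
  shows "approx_num X nX Y nY id n = c"
proof -
  define Set where "Set = {A. bounded_lin_op X nX Y nY A \<and> rank_less X A n}"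
  have eq: "approx_num X nX Y nY id n = (INF A\<in>Set. op_norm X nX nY (\<lambda>x k. x k - A x k))"
    unfolding approx_num_def Set_def by simp
  have A0S: "A0 \<in> Set" unfolding Set_def using A0 by simp
  have ge: "c \<le> (INF A\<in>Set. op_norm X nX nY (\<lambda>x k. x k - A x k))"
    by (rule cINF_greatest) (use A0S lb Set_def in auto)
  have bdd: "bdd_below ((\<lambda>A. op_norm X nX nY (\<lambda>x k. x k - A x k)) ` Set)"
    by (rule bdd_belowI[of _ c]) (use lb Set_def in auto)
  have "(INF A\<in>Set. op_norm X nX nY (\<lambda>x k. x k - A x k)) \<le> op_norm X nX nY (\<lambda>x k. x k - A0 x k)"
    by (rule cINF_lower[OF bdd A0S])
  then show ?thesis using ge A0(3) eq by linarith
qed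

lemma approx_zero: "approx_num X nX Y nY T 0 = Inf {}"
  unfolding approx_num_def rank_less_def by simp

theorem corollary3:
  fixes w :: "int^'d::finite \<Rightarrow> real" and n :: nat
  assumes "\<And>k. w k > 0"
    and "(\<lambda>k. 1 / (w k)\<^sup>2) summable_on UNIV"
  shows "approx_num M_set M_norm (F_set (\<lambda>k. 1 / w k)) (F_norm (\<lambda>k. 1 / w k)) id n
           = approx_num B_set B_norm (F_set (\<lambda>k. 1 / w k)) (F_norm (\<lambda>k. 1 / w k)) id n
       \<and> approx_num B_set B_norm (F_set (\<lambda>k. 1 / w k)) (F_norm (\<lambda>k. 1 / w k)) id n
           = approx_num (F_set w) (F_norm w) A_set A_norm id n"
proof (cases n)
  case 0
  then show ?thesis by (simp add: approx_zero)
next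
  case (Suc p)
  note wpos = assms(1) and sw = assms(2)
  define v where "v = (\<lambda>k. 1 / w k)"
  have vpos: "\<And>k. v k > 0" unfolding v_def using wpos by simp
  have sv: "(\<lambda>k. (v k)\<^sup>2) summable_on UNIV" using sw unfolding v_def by (simp add: power_divide)
  have sv2: "(\<lambda>k. (v k)\<^sup>2) summable_on UNIV" by (rule sv)
  have sqpos: "0 < (v k)\<^sup>2" for k using vpos[of k] by simp
  have "\<exists>J. finite J \<and> card J = p \<and> (\<forall>k\<in>J. \<forall>k'. k' \<notin> J \<longrightarrow> (v k')\<^sup>2 \<le> (v k)\<^sup>2)"
    by (rule exists_J[OF sv sqpos infinite_vec_int])
  then obtain J where finJ: "finite J" and cJ: "card J = p" and ordJ: "\<forall>k\<in>J. \<forall>k'. k' \<notin> J \<longrightarrow> (v k')\<^sup>2 \<le> (v k)\<^sup>2"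
    by blast
  have nJ: "n = Suc (card J)" using Suc cJ by simp
  define T where "T = sqrt (\<Sum>\<^sub>\<infinity>k. if k \<in> J then 0 else (v k)\<^sup>2)"
  have eqM: "approx_num M_set M_norm (F_set v) (F_norm v) id n = T"
  proof (rule approx_eq)
    fix A assume "bounded_lin_op M_set M_norm (F_set v) (F_norm v) A" "rank_less M_set A n"
    then show "T \<le> op_norm M_set M_norm (F_norm v) (\<lambda>x k. x k - A x k)"
      unfolding T_def nJ using lower_BM[OF vpos sv M_bound M_z finJ ordJ] by blast
  next
    show "bounded_lin_op M_set M_norm (F_set v) (F_norm v) (PJ J)"
      by (rule upper_BM(1)[OF vpos sv M_bound M_z finJ])
    show "rank_less M_set (PJ J) n" unfolding nJ by (rule PJ_rank[OF finJ])
    show "op_norm M_set M_norm (F_norm v) (\<lambda>x k. x k - PJ J x k) \<le> T"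
      unfolding T_def by (rule upper_BM(2)[OF vpos sv M_bound M_z finJ])
  qed
  have eqB: "approx_num B_set B_norm (F_set v) (F_norm v) id n = T"
  proof (rule approx_eq)
    fix A assume "bounded_lin_op B_set B_norm (F_set v) (F_norm v) A" "rank_less B_set A n"
    then show "T \<le> op_norm B_set B_norm (F_norm v) (\<lambda>x k. x k - A x k)"
      unfolding T_def nJ using lower_BM[OF vpos sv B_bound B_z finJ ordJ] by blast
  next
    show "bounded_lin_op B_set B_norm (F_set v) (F_norm v) (PJ J)"
      by (rule upper_BM(1)[OF vpos sv B_bound B_z finJ])
    show "rank_less B_set (PJ J) n" unfolding nJ by (rule PJ_rank[OF finJ])
    show "op_norm B_set B_norm (F_norm v) (\<lambda>x k. x k - PJ J x k) \<le> T"
      unfolding T_def by (rule upper_BM(2)[OF vpos sv B_bound B_z finJ])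
  qed
  have ordJ': "\<forall>k\<in>J. \<forall>k'. k' \<notin> J \<longrightarrow> (1 / w k')\<^sup>2 \<le> (1 / w k)\<^sup>2" using ordJ unfolding v_def .
  have eqA: "approx_num (F_set w) (F_norm w) A_set A_norm id n = T"
  proof (rule approx_eq)
    fix A assume "bounded_lin_op (F_set w) (F_norm w) A_set A_norm A" "rank_less (F_set w) A n"
    then show "T \<le> op_norm (F_set w) (F_norm w) A_norm (\<lambda>x k. x k - A x k)"
      unfolding T_def nJ v_def using lower_Op3[OF wpos sw finJ ordJ'] by blast
  next
    show "bounded_lin_op (F_set w) (F_norm w) A_set A_norm (PJ J)"
      by (rule upper_Op3(1)[OF wpos sw finJ])
    show "rank_less (F_set w) (PJ J) n" unfolding nJ by (rule PJ_rank[OF finJ])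
    show "op_norm (F_set w) (F_norm w) A_norm (\<lambda>x k. x k - PJ J x k) \<le> T"
      unfolding T_def v_def by (rule upper_Op3(2)[OF wpos sw finJ])
  qed
  show ?thesis using eqM eqB eqA unfolding v_def by simp
qed

end
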